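(* Let $p,q$ be distinct odd primes, $G=\mathrm{Gal}(\mathbb{Q}(\zeta_p)/\mathbb{Q})$, and $\theta=\sum_{\tau\in G}n_\tau\tau\in(1+\iota)\mathbb{Z}[G]$. Let $F=F_\theta(T)=\prod_{\tau\in G}(1-\tau(\zeta_p)T)^{n_\tau/q}\in\mathbb{Q}(\zeta_p)[[T]]$. Then (a) $F\in\mathbb{Q}(\zeta_p^+)[[T]]$; (b) if $t\in\mathbb{Q}$ with $|t|<1$ and there is $\alpha\in\mathbb{Q}(\zeta_p)$ with $(1-t\zeta_p)^\theta=\alpha^q$, then $\alpha\in\mathbb{Q}(\zeta_p^+)$ and $F^\sigma(t)=\sigma(\alpha)$ for every $\sigma\in G$.
   Context: $\zeta_p=e^{2i\pi/p}$, $\zeta_p^+=\zeta_p+\zeta_p^{-1}$, $\iota$ is complex conjugation. The factors are formal binomial series $(1-\tau(\zeta_p)T)^{n_\tau/q}=\sum_{k\ge0}\binom{n_\tau/q}{k}(-\tau(\zeta_p)T)^k$. $\mathbb{Z}[G]$ acts on $\mathbb{Q}(\zeta_p)^*$ by $z^{\sum n_\tau\tau}=\prod\tau(z)^{n_\tau}$. $F^\sigma$ is obtained by applying $\sigma$ to the coefficients of $F$. *)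

theory Defs
  imports Complex_Main "HOL-Computational_Algebra.Formal_Power_Series"
begin

definition zeta :: "nat \<Rightarrow> complex" where
  "zeta p = cis (2 * pi / real p)"

text \<open>The field Q(zeta_p) inside C (for p prime it is the Q-span of 1, zeta, ..., zeta^(p-1)).\<close>
definition Qzeta :: "nat \<Rightarrow> complex set" where
  "Qzeta p = {z. \<exists>c :: nat \<Rightarrow> rat. z = (\<Sum>k<p. of_rat (c k) * zeta p ^ k)}"

definition Qzeta_plus :: "nat \<Rightarrow> complex set" where
  "Qzeta_plus p = {z. \<exists>c :: nat \<Rightarrow> rat.
     z = (\<Sum>k<p. of_rat (c k) * (zeta p + inverse (zeta p)) ^ k)}"

text \<open>The Galois group Gal(Q(zeta_p)/Q): field automorphisms of Q(zeta_p)
  (every ring automorphism fixes Q). Values outside Q(zeta_p) are irrelevant.\<close>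
definition gal :: "nat \<Rightarrow> (complex \<Rightarrow> complex) set" where
  "gal p = {\<sigma>. (\<forall>x\<in>Qzeta p. \<forall>y\<in>Qzeta p. \<sigma> (x + y) = \<sigma> x + \<sigma> y \<and> \<sigma> (x * y) = \<sigma> x * \<sigma> y)
               \<and> \<sigma> 1 = 1 \<and> bij_betw \<sigma> (Qzeta p) (Qzeta p)}"

text \<open>Formal binomial series (1 - c T)^r = sum_k (r choose k) (-c T)^k.\<close>
definition binom_fps :: "complex \<Rightarrow> complex \<Rightarrow> complex fps" where
  "binom_fps c r = Abs_fps (\<lambda>k. (r gchoose k) * (- c) ^ k)"

text \<open>G is identified with (Z/p)^* via tau_a(zeta_p) = zeta_p^a, a = 1..p-1;
  theta = sum_a n(a) tau_a. F_theta = prod_a (1 - zeta_p^a T)^(n(a)/q).\<close>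
definition F_theta :: "nat \<Rightarrow> nat \<Rightarrow> (nat \<Rightarrow> int) \<Rightarrow> complex fps" where
  "F_theta p q n = (\<Prod>a\<in>{1..p-1}. binom_fps (zeta p ^ a) (of_int (n a) / of_nat q))"

end

theory Submission
  imports Defs "HOL-Analysis.Analysis" "HOL-Computational_Algebra.Computational_Algebra"
begin

lemma mpi_mult: "map_poly (of_int :: int \<Rightarrow> 'a::comm_ring_1) (A * B) = map_poly of_int A * map_poly of_int B"
  by (intro poly_eqI) (simp add: coeff_map_poly coeff_mult)

lemma mpi_add: "map_poly (of_int :: int \<Rightarrow> 'a::comm_ring_1) (A + B) = map_poly of_int A + map_poly of_int B"
  by (intro poly_eqI) (simp add: coeff_map_poly)

lemma mpi_diff: "map_poly (of_int :: int \<Rightarrow> 'a::comm_ring_1) (A - B) = map_poly of_int A - map_poly of_int B"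
  by (intro poly_eqI) (simp add: coeff_map_poly)

lemma mpi_smult: "map_poly (of_int :: int \<Rightarrow> 'a::comm_ring_1) (smult c A) = smult (of_int c) (map_poly of_int A)"
  by (intro poly_eqI) (simp add: coeff_map_poly)

lemma eisenstein_aux:
  fixes f g h :: "int poly" and P :: int
  assumes P: "prime P" and fgh: "f = g * h" and lc: "\<not> P dvd lead_coeff f"
    and low: "\<forall>i<degree f. P dvd coeff f i"
    and g0: "P dvd coeff g 0" and h0: "\<not> P dvd coeff h 0"
  shows "degree h = 0"
proof -
  have f0: "f \<noteq> 0" using lc by auto
  hence gn: "g \<noteq> 0" and hn: "h \<noteq> 0" using fgh by auto
  have "lead_coeff f = lead_coeff g * lead_coeff h" using fgh by (simp add: lead_coeff_mult)
  hence lg: "\<not> P dvd lead_coeff g" using lc by auto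
  define i where "i = (LEAST i. \<not> P dvd coeff g i)"
  have i1: "\<not> P dvd coeff g i" unfolding i_def by (rule LeastI[of _ "degree g"]) (use lg in auto)
  have i2: "i \<le> degree g" unfolding i_def by (rule Least_le) (use lg in auto)
  have i3: "\<And>j. j < i \<Longrightarrow> P dvd coeff g j" unfolding i_def using not_less_Least by blast
  have "coeff f i = (\<Sum>j\<le>i. coeff g j * coeff h (i - j))" using fgh by (simp add: coeff_mult)
  also have "\<dots> = (\<Sum>j<i. coeff g j * coeff h (i - j)) + coeff g i * coeff h 0"
    by (simp add: lessThan_Suc_atMost[symmetric])
  finally have ci: "coeff f i = (\<Sum>j<i. coeff g j * coeff h (i - j)) + coeff g i * coeff h 0" .
  have d1: "P dvd (\<Sum>j<i. coeff g j * coeff h (i - j))"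
    by (intro dvd_sum) (simp add: i3)
  have d2: "\<not> P dvd coeff g i * coeff h 0" using P i1 h0 by (simp add: prime_dvd_mult_iff)
  have "\<not> P dvd coeff f i" using d1 d2 ci by (metis dvd_add_right_iff)
  hence "\<not> i < degree f" using low by auto
  hence "degree f \<le> degree g" using i2 by simp
  moreover have "degree f = degree g + degree h" using fgh gn hn by (simp add: degree_mult_eq)
  ultimately show ?thesis by simp
qed

lemma eisenstein:
  fixes f g h :: "int poly" and P :: int
  assumes P: "prime P" and fgh: "f = g * h" and lc: "\<not> P dvd lead_coeff f"
    and low: "\<forall>i<degree f. P dvd coeff f i" and c0: "\<not> P^2 dvd coeff f 0"
  shows "degree g = 0 \<or> degree h = 0"
proof (cases "degree f = 0")
  case True
  have f0: "f \<noteq> 0" using lc by auto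
  hence "g \<noteq> 0" "h \<noteq> 0" using fgh by auto
  then show ?thesis using True fgh by (simp add: degree_mult_eq)
next
  case False
  hence "P dvd coeff f 0" using low by auto
  hence "P dvd coeff g 0 * coeff h 0" using fgh by (simp add: coeff_mult_0)
  hence "P dvd coeff g 0 \<or> P dvd coeff h 0" using P by (simp add: prime_dvd_mult_iff)
  moreover have "\<not> (P dvd coeff g 0 \<and> P dvd coeff h 0)"
  proof
    assume "P dvd coeff g 0 \<and> P dvd coeff h 0"
    hence "P^2 dvd coeff g 0 * coeff h 0" by (auto simp: power2_eq_square intro: mult_dvd_mono)
    thus False using c0 fgh by (simp add: coeff_mult_0)
  qed
  ultimately show ?thesis
    using eisenstein_aux[OF P fgh lc low] eisenstein_aux[OF P _ lc low, of h g] fgh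
    by (auto simp: mult.commute)
qed

definition cycp :: "nat \<Rightarrow> int poly" where "cycp p = (\<Sum>k<p. monom 1 k)"

lemma coeff_cycp: "coeff (cycp p) i = (if i < p then 1 else 0)"
  by (simp add: cycp_def coeff_sum)

lemma monom_pcompose: "pcompose (monom (1::'a::comm_ring_1) k) r = r ^ k"
  by (induction k) (simp_all add: monom_Suc pcompose_pCons monom_0 pcompose_1)

lemma coeff_lin_pow: "coeff ([:1, 1:] ^ k) j = (of_nat (k choose j) :: 'a::comm_ring_1)"
proof (cases "j \<le> k")
  case True thus ?thesis by (simp add: coeff_linear_poly_power)
next
  case False
  have "degree ([:1::'a, 1:] ^ k) \<le> k"
    by (metis degree_linear_power dual_order.refl)
  thus ?thesis using False by (simp add: coeff_eq_0 binomial_eq_0)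
qed

lemma coeff_cycp_shift:
  assumes "p > 0"
  shows "coeff (pcompose (cycp p) [:1,1:]) j = int (p choose (j+1))"
proof -
  have "pcompose (cycp p) [:1,1:] = (\<Sum>k<p. [:1,1:]^k)"
    by (simp add: cycp_def pcompose_sum monom_pcompose)
  hence "coeff (pcompose (cycp p) [:1,1:]) j = (\<Sum>k<p. int (k choose j))"
    by (simp add: coeff_sum coeff_lin_pow)
  also have "\<dots> = int (\<Sum>k\<le>p-1. k choose j)"
    using assms by (simp add: lessThan_Suc_atMost[symmetric])
  also have "\<dots> = int (p choose (j+1))" using assms by (simp add: sum_choose_upper)
  finally show ?thesis .
qed

lemma degree_cycp: assumes "p > 0" shows "degree (cycp p) = p - 1"
proof (rule antisym)
  show "degree (cycp p) \<le> p - 1" by (rule degree_le) (auto simp: coeff_cycp)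
  show "p - 1 \<le> degree (cycp p)" by (rule le_degree) (use assms in \<open>simp add: coeff_cycp\<close>)
qed

lemma zeta_pow: "zeta p ^ k = cis (2 * pi * real k / real p)"
proof -
  have "zeta p ^ k = cis (real k * (2 * pi / real p))" unfolding zeta_def by (rule Complex.DeMoivre)
  also have "real k * (2 * pi / real p) = 2 * pi * real k / real p" by simp
  finally show ?thesis .
qed

lemma zeta_p: assumes "p > 0" shows "zeta p ^ p = 1"
  using assms by (simp add: zeta_pow)

lemma zeta_inj: assumes "p > 0" "i < p" "j < p" "zeta p ^ i = zeta p ^ j" shows "i = j"
  using Complex.bij_betw_roots_unity[OF assms(1)] assms(2-4) unfolding bij_betw_def inj_on_def zeta_pow
  by auto

lemma zeta_ne1: assumes "p > 1" shows "zeta p \<noteq> 1"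
  using zeta_inj[of p 1 0] assms by auto

lemma zeta_ne0: "zeta p \<noteq> 0"
  by (simp add: zeta_def)

lemma zeta_pow_mod: assumes "p > 0" shows "zeta p ^ k = zeta p ^ (k mod p)"
proof -
  have "zeta p ^ k = zeta p ^ (p * (k div p) + k mod p)" by simp
  also have "\<dots> = zeta p ^ (k mod p)" by (simp only: power_add power_mult zeta_p[OF assms]) simp
  finally show ?thesis .
qed

lemma zeta_roots: assumes "p > 0" "z ^ p = 1" shows "\<exists>k<p. z = zeta p ^ k"
  using Complex.bij_betw_roots_unity[OF assms(1)] assms(2) unfolding bij_betw_def zeta_pow
  by auto

lemma poly_mpi: "poly (map_poly of_int R) (z::complex) = (\<Sum>i\<le>degree R. of_int (coeff R i) * z ^ i)"
  by (simp add: poly_altdef degree_map_poly coeff_map_poly)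

lemma cycp_root: assumes "p > 1" shows "poly (map_poly of_int (cycp p)) (zeta p) = 0"
proof -
  have "map_poly (of_int :: int \<Rightarrow> complex) (cycp p) = (\<Sum>k<p. monom 1 k)"
    by (intro poly_eqI) (simp add: coeff_map_poly coeff_cycp coeff_sum)
  hence "poly (map_poly of_int (cycp p)) (zeta p) = (\<Sum>k<p. zeta p ^ k)"
    by (simp add: poly_sum poly_monom)
  also have "\<dots> = (zeta p ^ p - 1) / (zeta p - 1)"
    using zeta_ne1[OF assms] by (rule geometric_sum)
  also have "\<dots> = 0" using assms by (simp add: zeta_p)
  finally show ?thesis .
qed

lemma indep_min:
  assumes p: "prime p"
  assumes R0: "R0 \<noteq> 0" "poly (map_poly of_int R0) (zeta p) = 0"
    and minR: "\<And>R. R \<noteq> 0 \<Longrightarrow> poly (map_poly of_int R) (zeta p) = 0 \<Longrightarrow> degree R0 \<le> degree R"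
  shows "degree R0 \<ge> p - 1"
proof -
  have p1: "p > 1" using p prime_gt_1_nat by auto
  define G where "G = primitive_part R0"
  have Gn: "G \<noteq> 0" using R0 by (simp add: G_def)
  have cG: "content G = 1" using R0 by (simp add: G_def content_primitive_part)
  have dG: "degree G = degree R0" by (simp add: G_def degree_primitive_part)
  have "R0 = smult (content R0) G" by (simp add: G_def content_times_primitive_part)
  hence "poly (map_poly of_int R0) (zeta p) = of_int (content R0) * poly (map_poly of_int G) (zeta p)"
    by (metis mpi_smult poly_smult)
  moreover have "content R0 \<noteq> 0" using R0 by simp
  ultimately have Gr: "poly (map_poly of_int G) (zeta p) = 0" using R0 by simp
  obtain Qt r where qr: "pseudo_divmod (cycp p) G = (Qt, r)" by (metis surj_pair)
  define c where "c = coeff G (degree G) ^ (Suc (degree (cycp p)) - degree G)"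
  have eq: "smult c (cycp p) = G * Qt + r" using pseudo_divmod(1)[OF Gn qr] by (simp add: c_def)
  have rdeg: "r = 0 \<or> degree r < degree G" using pseudo_divmod(2)[OF Gn qr] .
  have cn: "c \<noteq> 0" using Gn by (simp add: c_def)
  have "poly (map_poly of_int (smult c (cycp p))) (zeta p) = 0"
    by (simp add: mpi_smult cycp_root[OF p1])
  hence "poly (map_poly of_int r) (zeta p) = 0"
    by (simp add: eq mpi_add mpi_mult Gr)
  hence r0: "r = 0" using rdeg minR[of r] dG by force
  have ccyc: "content (cycp p) = 1"
  proof -
    have "content (cycp p) dvd 1" using content_dvd_coeff[of "cycp p" 0] p1 by (simp add: coeff_cycp)
    thus ?thesis by (metis normalize_content abs_of_nonneg zdvd1_eq normalize_int_def abs_ge_zero)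
  qed
  have "content (smult c (cycp p)) = \<bar>c\<bar>" by (simp add: ccyc)
  moreover have "content (G * Qt) = content Qt" by (simp add: content_mult cG)
  ultimately have cQ: "content Qt = \<bar>c\<bar>" using eq r0 by simp
  define H0 where "H0 = primitive_part Qt"
  have "Qt = smult \<bar>c\<bar> H0" by (metis H0_def cQ content_times_primitive_part)
  hence "smult c (cycp p) = smult \<bar>c\<bar> (G * H0)" using eq r0 by simp
  hence "smult (sgn c) (smult c (cycp p)) = smult (sgn c) (smult \<bar>c\<bar> (G * H0))" by simp
  hence "smult (sgn c * c) (cycp p) = smult (\<bar>c\<bar>) (smult (sgn c) (G * H0))" by (simp add: mult.commute)
  hence "smult \<bar>c\<bar> (cycp p) = smult (\<bar>c\<bar>) (smult (sgn c) (G * H0))" using sgn_mult_self_eq by (metis abs_sgn mult.commute)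
  hence "smult \<bar>c\<bar> (cycp p - smult (sgn c) (G * H0)) = 0" by (simp only: smult_diff_right)
  hence cyc: "cycp p = G * smult (sgn c) H0" using cn by simp
  define H where "H = smult (sgn c) H0"
  have cycH: "cycp p = G * H" using cyc by (simp add: H_def)
  have Hn: "H \<noteq> 0" using cycH ccyc by auto
  let ?L = "[:1,1::int:]"
  have sh: "pcompose (cycp p) ?L = pcompose G ?L * pcompose H ?L" by (simp add: cycH pcompose_mult)
  have dpsi: "degree (pcompose (cycp p) ?L) = p - 1" using degree_cycp[of p] p1 by (simp add: degree_pcompose)
  have Pp: "prime (int p)" using p by simp
  have "degree (pcompose G ?L) = 0 \<or> degree (pcompose H ?L) = 0"
  proof (rule eisenstein[OF Pp sh])
    show "\<not> int p dvd lead_coeff (pcompose (cycp p) ?L)"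
      using p1 by (simp add: dpsi coeff_cycp_shift)
    show "\<forall>i<degree (pcompose (cycp p) ?L). int p dvd coeff (pcompose (cycp p) ?L) i"
    proof safe
      fix i assume "i < degree (pcompose (cycp p) ?L)"
      hence "i + 1 < p" "i + 1 \<noteq> 0" using dpsi by auto
      hence "p dvd p choose (i+1)" using dvd_choose_prime p p1 by auto
      thus "int p dvd coeff (pcompose (cycp p) ?L) i" using p1 by (simp add: coeff_cycp_shift)
    qed
    show "\<not> (int p)^2 dvd coeff (pcompose (cycp p) ?L) 0"
    proof
      assume "(int p)^2 dvd coeff (pcompose (cycp p) ?L) 0"
      hence "int p * int p dvd int p * 1" using p1 coeff_cycp_shift[of p 0] by (simp del: coeff_pcompose_0 add: power2_eq_square)
      hence "int p dvd 1" using p1 by (subst (asm) dvd_mult_cancel_left) auto  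
      thus False using p1 by simp
    qed
  qed
  hence "degree G = 0 \<or> degree H = 0" by (simp add: degree_pcompose)
  moreover have "degree G \<noteq> 0"
  proof
    assume "degree G = 0"
    then obtain g where "G = [:g:]" by (metis degree_eq_zeroE)
    thus False using Gr Gn by (simp add: map_poly_pCons)
  qed
  ultimately have "degree H = 0" by simp
  hence "degree (cycp p) = degree G" using cycH Gn Hn by (simp add: degree_mult_eq)
  thus ?thesis using dG degree_cycp p1 by simp
qed

lemma indep:
  assumes p: "prime p" and R: "R \<noteq> 0" "poly (map_poly of_int R) (zeta p) = 0"
  shows "degree R \<ge> p - 1"
proof -
  define P where "P = (\<lambda>R :: int poly. R \<noteq> 0 \<and> poly (map_poly of_int R) (zeta p) = 0)"
  have "P R" using R by (simp add: P_def)
  from ex_has_least_nat[of P R degree, OF this] obtain R0 where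
    R0: "P R0" "\<And>S. P S \<Longrightarrow> degree R0 \<le> degree S" by blast
  have "degree R0 \<ge> p - 1"
    by (rule indep_min[OF p]) (use R0 in \<open>auto simp: P_def\<close>)
  moreover have "degree R0 \<le> degree R" using R0(2) \<open>P R\<close> by blast
  ultimately show ?thesis by simp
qed

lemma freshman:
  fixes x y :: "'a::comm_ring_1"
  assumes q: "prime q"
  shows "(x + y)^q = x^q + y^q + of_nat q * (\<Sum>k\<in>{1..q-1}. of_nat ((q choose k) div q) * x^k * y^(q-k))"
proof -
  have q1: "q > 1" using q prime_gt_1_nat by auto
  have split: "{..q} = insert 0 (insert q {1..q-1})" using q1 by auto
  have "(x + y)^q = (\<Sum>k\<le>q. of_nat (q choose k) * x^k * y^(q-k))" by (rule binomial_ring)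
  also have "\<dots> = y^q + x^q + (\<Sum>k\<in>{1..q-1}. of_nat (q choose k) * x^k * y^(q-k))"
    using q1 by (subst split) (simp add: sum.insert)
  also have "(\<Sum>k\<in>{1..q-1}. of_nat (q choose k) * x^k * y^(q-k)) =
      (\<Sum>k\<in>{1..q-1}. of_nat q * (of_nat ((q choose k) div q) * x^k * y^(q-k)))"
  proof (rule sum.cong[OF refl])
    fix k assume k: "k \<in> {1..q-1}"
    have "q dvd q choose k" using dvd_choose_prime[of k q] k q q1 by auto
    hence "q choose k = q * ((q choose k) div q)" by simp
    hence "(of_nat (q choose k) :: 'a) = of_nat q * of_nat ((q choose k) div q)"
      by (metis of_nat_mult)
    thus "of_nat (q choose k) * x^k * y^(q-k) = of_nat q * (of_nat ((q choose k) div q) * x^k * y^(q-k))"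
      by (simp add: mult.assoc)
  qed
  finally show ?thesis by (simp add: sum_distrib_left add.commute)
qed

lemma fermat_nat:
  assumes q: "prime q"
  shows "int q dvd int a ^ q - int a"
proof (induction a)
  case 0 thus ?case using q prime_gt_0_nat by (simp add: power_0_left)
next
  case (Suc a)
  define S :: int where "S = (\<Sum>k\<in>{1..q-1}. of_nat ((q choose k) div q) * int a^k * 1^(q-k))"
  have "(int a + 1)^q = int a^q + 1 + int q * S" using freshman[OF q, of "int a" 1] by (simp add: S_def)
  hence "int (Suc a) ^ q - int (Suc a) = (int a ^ q - int a) + int q * S" by (simp add: add.commute)
  thus ?case using Suc by (metis dvd_add dvd_triv_left)
qed

lemma fermat_int:
  assumes q: "prime q" "odd q"
  shows "int q dvd a ^ q - a"
proof (cases "a \<ge> 0")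
  case True
  then obtain n where "a = int n" by (metis nonneg_eq_int)
  thus ?thesis using fermat_nat[OF q(1)] by simp
next
  case False
  define n where "n = nat (- a)"
  have n: "a = - int n" using False by (simp add: n_def)
  have "a ^ q - a = - (int n ^ q - int n)" using q(2) by (simp add: n)
  thus ?thesis using fermat_nat[OF q(1), of n] by (metis dvd_minus_iff)
qed

lemma fermat_int_iter:
  assumes q: "prime q" "odd q"
  shows "int q dvd a ^ (q ^ N) - a"
proof (induction N)
  case 0 thus ?case by simp
next
  case (Suc N)
  have "a ^ (q ^ Suc N) = (a ^ (q ^ N)) ^ q" by (simp add: power_mult[symmetric] mult.commute)
  hence "a ^ (q ^ Suc N) - a = ((a ^ (q ^ N)) ^ q - a ^ (q ^ N)) + (a ^ (q ^ N) - a)" by simp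
  thus ?case using Suc fermat_int[OF q, of "a ^ (q ^ N)"] by (metis dvd_add)
qed

lemma fermat_p:
  assumes p: "prime p" and q: "prime q" and pq: "p \<noteq> q"
  shows "q ^ (p - 1) mod p = 1"
proof -
  have "int p dvd int q ^ p - int q" by (rule fermat_nat[OF p])
  moreover have "int q ^ p - int q = int q * (int q ^ (p - 1) - 1)"
    using p prime_gt_0_nat by (cases p) (simp_all add: algebra_simps)
  ultimately have "int p dvd int q * (int q ^ (p - 1) - 1)" by simp
  moreover have "\<not> int p dvd int q"
  proof
    assume "int p dvd int q"
    hence "p dvd q" by simp
    thus False using p q pq primes_dvd_imp_eq by blast
  qed
  ultimately have "int p dvd int q ^ (p - 1) - 1" using p by (simp add: prime_dvd_mult_iff)
  moreover have "q ^ (p - 1) \<ge> 1" using prime_gt_0_nat[OF q] by (simp add: Suc_le_eq)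
  ultimately have "p dvd q ^ (p - 1) - 1"
    by (metis int_dvd_int_iff of_nat_1 of_nat_diff of_nat_power)
  hence "q ^ (p - 1) mod p = 1 mod p" using \<open>q ^ (p - 1) \<ge> 1\<close> by (subst mod_eq_dvd_iff_nat) auto
  thus ?thesis using prime_gt_1_nat[OF p] by simp
qed

inductive_set Zz :: "nat \<Rightarrow> complex set" for p where
  Zz_zeta: "zeta p \<in> Zz p"
| Zz_int: "of_int m \<in> Zz p"
| Zz_add: "x \<in> Zz p \<Longrightarrow> y \<in> Zz p \<Longrightarrow> x + y \<in> Zz p"
| Zz_mult: "x \<in> Zz p \<Longrightarrow> y \<in> Zz p \<Longrightarrow> x * y \<in> Zz p"

lemma Zz_0: "0 \<in> Zz p" using Zz_int[of 0 p] by (simp only: of_int_0)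
lemma Zz_1: "1 \<in> Zz p" using Zz_int[of 1 p] by (simp only: of_int_1)
lemma Zz_nat: "of_nat n \<in> Zz p" using Zz_int[of "int n" p] by (simp only: of_int_of_nat_eq)
lemma Zz_minus: "x \<in> Zz p \<Longrightarrow> - x \<in> Zz p"
proof -
  assume "x \<in> Zz p"
  from Zz_mult[OF Zz_int[of "-1"] this] show ?thesis by simp
qed
lemma Zz_diff: "x \<in> Zz p \<Longrightarrow> y \<in> Zz p \<Longrightarrow> x - y \<in> Zz p"
  unfolding diff_conv_add_uminus by (intro Zz_add Zz_minus)
lemma Zz_pow: "x \<in> Zz p \<Longrightarrow> x ^ n \<in> Zz p"
  by (induction n) (auto intro: Zz_1 Zz_mult)
lemma Zz_sum: "(\<And>i. i \<in> A \<Longrightarrow> f i \<in> Zz p) \<Longrightarrow> sum f A \<in> Zz p"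
  by (induction A rule: infinite_finite_induct) (auto intro: Zz_0 Zz_add)
lemma Zz_prod: "(\<And>i. i \<in> A \<Longrightarrow> f i \<in> Zz p) \<Longrightarrow> prod f A \<in> Zz p"
  by (induction A rule: infinite_finite_induct) (auto intro: Zz_1 Zz_mult)

lemma Zz_poly: "x \<in> Zz p \<Longrightarrow> \<exists>R. x = poly (map_poly of_int R) (zeta p)"
proof (induction rule: Zz.induct)
  case Zz_zeta thus ?case by (intro exI[of _ "[:0,1:]"]) (simp add: map_poly_pCons)
next
  case (Zz_int m) thus ?case by (intro exI[of _ "[:m:]"]) (simp add: map_poly_pCons)
next
  case (Zz_add x y) then obtain R S where "x = poly (map_poly of_int R) (zeta p)" "y = poly (map_poly of_int S) (zeta p)" by blast
  thus ?case by (intro exI[of _ "R + S"]) (simp add: mpi_add)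
next
  case (Zz_mult x y) then obtain R S where "x = poly (map_poly of_int R) (zeta p)" "y = poly (map_poly of_int S) (zeta p)" by blast
  thus ?case by (intro exI[of _ "R * S"]) (simp add: mpi_mult)
qed


definition mq :: "nat \<Rightarrow> nat \<Rightarrow> complex \<Rightarrow> bool" where
  "mq p q x \<longleftrightarrow> (\<exists>z\<in>Zz p. x = of_nat q * z)"

lemma mq_0: "mq p q 0" unfolding mq_def by (rule bexI[OF _ Zz_0]) simp
lemma mq_add: "mq p q x \<Longrightarrow> mq p q y \<Longrightarrow> mq p q (x + y)"
proof -
  assume "mq p q x" "mq p q y"
  then obtain a b where ab: "a \<in> Zz p" "b \<in> Zz p" "x = of_nat q * a" "y = of_nat q * b"
    unfolding mq_def by blast
  show ?thesis unfolding mq_def by (rule bexI[OF _ Zz_add[OF ab(1,2)]]) (simp add: ab(3,4) distrib_left)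
qed
lemma mq_minus: "mq p q x \<Longrightarrow> mq p q (- x)"
proof -
  assume "mq p q x"
  then obtain a where ab: "a \<in> Zz p" "x = of_nat q * a" unfolding mq_def by blast
  show ?thesis unfolding mq_def by (rule bexI[OF _ Zz_minus[OF ab(1)]]) (simp add: ab(2))
qed
lemma mq_diff: "mq p q x \<Longrightarrow> mq p q y \<Longrightarrow> mq p q (x - y)"
  unfolding diff_conv_add_uminus by (intro mq_add mq_minus)
lemma mq_multR: "mq p q x \<Longrightarrow> y \<in> Zz p \<Longrightarrow> mq p q (x * y)"
proof -
  assume "mq p q x" and y: "y \<in> Zz p"
  then obtain a where ab: "a \<in> Zz p" "x = of_nat q * a" unfolding mq_def by blast
  show ?thesis unfolding mq_def by (rule bexI[OF _ Zz_mult[OF ab(1) y]]) (simp add: ab(2) mult.assoc)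
qed
lemma mq_multL: "mq p q x \<Longrightarrow> y \<in> Zz p \<Longrightarrow> mq p q (y * x)"
  by (subst mult.commute) (rule mq_multR)
lemma mq_of_nat: "z \<in> Zz p \<Longrightarrow> mq p q (of_nat q * z)"
  unfolding mq_def by blast
lemma mq_sum: "(\<And>i. i \<in> A \<Longrightarrow> mq p q (f i)) \<Longrightarrow> mq p q (sum f A)"
  by (induction A rule: infinite_finite_induct) (auto intro: mq_0 mq_add)
lemma mq_Zz: "mq p q x \<Longrightarrow> x \<in> Zz p"
proof -
  assume "mq p q x"
  then obtain a where ab: "a \<in> Zz p" "x = of_nat q * a" unfolding mq_def by blast
  show ?thesis unfolding ab(2) by (rule Zz_mult[OF Zz_nat ab(1)])
qed

lemma mq_pow_cong:
  assumes "x \<in> Zz p" "y \<in> Zz p" "mq p q (x - y)"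
  shows "mq p q (x ^ n - y ^ n)"
proof -
  have "x ^ n - y ^ n = (x - y) * (\<Sum>i<n. y^(n - Suc i) * x^i)" by (rule power_diff_sumr2)
  moreover have "(\<Sum>i<n. y^(n - Suc i) * x^i) \<in> Zz p"
    using assms by (intro Zz_sum Zz_mult Zz_pow)
  ultimately show ?thesis using mq_multR assms(3) by simp
qed

lemma mq_freshman:
  assumes q: "prime q" and xy: "x \<in> Zz p" "y \<in> Zz p"
  shows "mq p q ((x + y)^q - x^q - y^q)"
proof -
  have "(x + y)^q - x^q - y^q = of_nat q * (\<Sum>k\<in>{1..q-1}. of_nat ((q choose k) div q) * x^k * y^(q-k))"
    using freshman[OF q, of x y] by simp
  moreover have "(\<Sum>k\<in>{1..q-1}. of_nat ((q choose k) div q) * x^k * y^(q-k)) \<in> Zz p"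
    using xy by (intro Zz_sum Zz_mult Zz_pow Zz_nat)
  ultimately show ?thesis by (simp add: mq_of_nat)
qed

lemma mq_freshman_iter:
  assumes q: "prime q" and xy: "x \<in> Zz p" "y \<in> Zz p"
  shows "mq p q ((x + y)^(q^N) - x^(q^N) - y^(q^N))"
proof (induction N)
  case 0 thus ?case by (simp add: mq_0)
next
  case (Suc N)
  define a where "a = (x + y)^(q^N)"
  define b where "b = x^(q^N) + y^(q^N)"
  have Za: "a \<in> Zz p" "b \<in> Zz p" unfolding a_def b_def using xy by (auto intro!: Zz_pow Zz_add)
  have "mq p q (a - b)" using Suc by (simp add: a_def b_def diff_diff_eq)
  hence 1: "mq p q (a^q - b^q)" using mq_pow_cong Za by blast
  have 2: "mq p q (b^q - (x^(q^N))^q - (y^(q^N))^q)" unfolding b_def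
    by (rule mq_freshman[OF q]) (use xy in \<open>auto intro: Zz_pow\<close>)
  have e: "\<And>z::complex. z ^ (q ^ Suc N) = (z ^ (q^N)) ^ q" by (simp add: power_mult[symmetric] mult.commute)
  have "(x + y)^(q^Suc N) - x^(q^Suc N) - y^(q^Suc N) =
        (a^q - b^q) + (b^q - (x^(q^N))^q - (y^(q^N))^q)" unfolding e a_def by (simp add: algebra_simps)
  thus ?case using mq_add[OF 1 2] by simp
qed

lemma zeta_Zz_pow: "zeta p ^ k \<in> Zz p" by (rule Zz_pow[OF Zz_zeta])

lemma frob_Zz:
  assumes p: "prime p" and q: "prime q" "odd q" and pq: "p \<noteq> q" and x: "x \<in> Zz p"
  shows "mq p q (x ^ (q ^ (p - 1)) - x)"
  using x
proof (induction rule: Zz.induct)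
  case Zz_zeta
  have "zeta p ^ (q ^ (p - 1)) = zeta p ^ (q ^ (p - 1) mod p)"
    using p prime_gt_0_nat zeta_pow_mod by blast
  also have "\<dots> = zeta p" using fermat_p[OF p q(1) pq] by simp
  finally show ?case by (simp add: mq_0)
next
  case (Zz_int m)
  obtain k where k: "m ^ (q ^ (p - 1)) - m = int q * k" using fermat_int_iter[OF q, of m "p - 1"] by (auto elim: dvdE)
  have "(of_int m :: complex) ^ (q ^ (p - 1)) - of_int m = of_int (m ^ (q ^ (p - 1)) - m)" by simp
  also have "\<dots> = of_int (int q * k)" by (simp only: k)
  also have "\<dots> = of_nat q * of_int k" by simp
  finally have eq: "(of_int m :: complex) ^ (q ^ (p - 1)) - of_int m = of_nat q * of_int k" .
  show ?case unfolding eq by (rule mq_of_nat[OF Zz.Zz_int])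
next
  case (Zz_add x y)
  have "(x + y) ^ (q ^ (p - 1)) - (x + y) = ((x + y) ^ (q ^ (p - 1)) - x ^ (q ^ (p - 1)) - y ^ (q ^ (p - 1)))
     + (x ^ (q ^ (p - 1)) - x) + (y ^ (q ^ (p - 1)) - y)" by simp
  thus ?case using mq_freshman_iter[OF q(1) Zz_add(1,2)] Zz_add(3,4) by (metis mq_add)
next
  case (Zz_mult x y)
  have "(x * y) ^ (q ^ (p - 1)) - x * y = (x ^ (q ^ (p - 1)) - x) * y ^ (q ^ (p - 1)) + x * (y ^ (q ^ (p - 1)) - y)"
    by (simp add: power_mult_distrib algebra_simps)
  thus ?case using Zz_mult mq_multR mq_multL mq_add Zz_pow by metis
qed

lemma frob_iter:
  assumes p: "prime p" and q: "prime q" "odd q" and pq: "p \<noteq> q" and x: "x \<in> Zz p"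
  shows "mq p q (x ^ ((q ^ (p - 1)) ^ m) - x)"
proof (induction m)
  case 0 thus ?case by (simp add: mq_0)
next
  case (Suc m)
  let ?Q = "q ^ (p - 1)"
  have e: "x ^ (?Q ^ Suc m) = (x ^ (?Q ^ m)) ^ ?Q" by (simp add: power_mult[symmetric] mult.commute)
  have "mq p q ((x ^ (?Q ^ m)) ^ ?Q - x ^ (?Q ^ m))" by (rule frob_Zz[OF p q pq Zz_pow[OF x]])
  from mq_add[OF this Suc] show ?case unfolding e by simp
qed

lemma prim_root:
  fixes \<omega> :: complex
  assumes q: "prime q" and w: "\<omega> ^ q = 1" "\<omega> \<noteq> 1" and k: "0 < k" "k < q"
  shows "\<omega> ^ k \<noteq> 1"
proof
  assume wk: "\<omega> ^ k = 1"
  define d where "d = (LEAST n. 0 < n \<and> \<omega> ^ n = 1)"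
  have d1: "0 < d \<and> \<omega> ^ d = 1" unfolding d_def by (rule LeastI[of _ k]) (use k wk in auto)
  have d2: "\<And>n. 0 < n \<Longrightarrow> \<omega> ^ n = 1 \<Longrightarrow> d \<le> n" unfolding d_def by (auto intro: Least_le)
  have "d \<le> k" using d2 k wk by auto
  have "\<omega> ^ q = \<omega> ^ (d * (q div d) + q mod d)" by simp
  also have "\<dots> = \<omega> ^ (q mod d)" by (simp only: power_add power_mult d1) simp
  finally have "\<omega> ^ (q mod d) = 1" using w by simp
  hence "q mod d = 0" using d2[of "q mod d"] d1 by (metis mod_less_divisor not_le neq0_conv)
  hence "d dvd q" by auto
  hence "d = 1 \<or> d = q" using q by (simp add: prime_nat_iff)
  thus False using d1 w \<open>d \<le> k\<close> k by auto
qed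

lemma prod_roots_unity:
  fixes \<omega> :: complex
  assumes q: "prime q" and w: "\<omega> ^ q = 1" "\<omega> \<noteq> 1"
  shows "(\<Prod>k\<in>{1..q-1}. (1 - \<omega> ^ k)) = of_nat q"
proof -
  have q1: "q > 1" using q prime_gt_1_nat by auto
  have w0: "\<omega> \<noteq> 0"
  proof
    assume "\<omega> = 0"
    hence "\<omega> ^ q = 0" using q1 by simp
    thus False using w by simp
  qed
  have inj: "inj_on (\<lambda>k. \<omega> ^ k) {1..q-1}"
  proof (rule inj_onI)
    fix i j assume ij: "i \<in> {1..q-1}" "j \<in> {1..q-1}" "\<omega> ^ i = \<omega> ^ j"
    show "i = j"
    proof (rule ccontr)
      assume "i \<noteq> j"
      then consider "i < j" | "j < i" by linarith
      thus False
      proof cases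
        case 1
        have "\<omega> ^ j = \<omega> ^ i * \<omega> ^ (j - i)" using 1 by (simp add: power_add[symmetric])
        hence "\<omega> ^ (j - i) = 1" using ij w0 by simp
        moreover have "j - i < q" "0 < j - i" using 1 ij by auto
        ultimately show False using prim_root[OF q w, of "j - i"] by auto
      next
        case 2
        have "\<omega> ^ i = \<omega> ^ j * \<omega> ^ (i - j)" using 2 by (simp add: power_add[symmetric])
        hence "\<omega> ^ (i - j) = 1" using ij w0 by simp
        moreover have "i - j < q" "0 < i - j" using 2 ij by auto
        ultimately show False using prim_root[OF q w, of "i - j"] by auto
      qed
    qed
  qed
  define A :: "complex poly" where "A = (\<Sum>j<q. monom 1 j)"
  define B :: "complex poly" where "B = (\<Prod>k\<in>{1..q-1}. [:- (\<omega> ^ k), 1:])"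
  have rootA: "poly A (\<omega> ^ k) = 0" if k: "k \<in> {1..q-1}" for k
  proof -
    have "0 < k" "k < q" using k q1 by auto
    hence ne: "\<omega> ^ k \<noteq> 1" using prim_root[OF q w, of k] by auto
    have "poly A (\<omega> ^ k) = (\<Sum>j<q. (\<omega> ^ k) ^ j)" by (simp add: A_def poly_sum poly_monom)
    also have "\<dots> = ((\<omega> ^ k) ^ q - 1) / (\<omega> ^ k - 1)" using ne by (rule geometric_sum)
    also have "(\<omega> ^ k) ^ q = (\<omega> ^ q) ^ k" by (metis power_mult mult.commute)
    also have "\<dots> = 1" using w by simp
    finally show ?thesis by simp
  qed
  have rootB: "poly B (\<omega> ^ k) = 0" if k: "k \<in> {1..q-1}" for k
    unfolding B_def poly_prod using k by (intro prod_zero) auto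
  have dA: "degree A \<le> q - 1" unfolding A_def by (rule degree_le) (auto simp: coeff_sum)
  have cA: "coeff A (q - 1) = 1" using q1 by (simp add: A_def coeff_sum)
  have Bnz: "\<forall>k\<in>{1..q-1}. [:- (\<omega> ^ k), 1:] \<noteq> 0" by auto
  have dB: "degree B = q - 1" unfolding B_def by (subst degree_prod_eq_sum_degree[OF Bnz]) simp
  have "lead_coeff B = 1" unfolding B_def by (simp add: lead_coeff_prod)
  hence cB: "coeff B (q - 1) = 1" using dB by simp
  have "A = B"
  proof (rule ccontr)
    assume "A \<noteq> B"
    hence D0: "A - B \<noteq> 0" by simp
    have "degree (A - B) \<le> q - 1" using dA dB by (intro degree_diff_le) simp_all
    moreover have "coeff (A - B) (q - 1) = 0" using cA cB by simp
    moreover have "degree (A - B) \<noteq> q - 1"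
    proof
      assume "degree (A - B) = q - 1"
      hence "lead_coeff (A - B) = 0" using cA cB by simp
      hence "A - B = 0" by (simp only: leading_coeff_0_iff)
      thus False using D0 by blast
    qed
    ultimately have "degree (A - B) < q - 1" by linarith
    moreover have "card ((\<lambda>k. \<omega> ^ k) ` {1..q-1}) \<le> card {x. poly (A - B) x = 0}"
      by (rule card_mono[OF poly_roots_finite[OF D0]]) (auto simp: rootA rootB)
    moreover have "card ((\<lambda>k. \<omega> ^ k) ` {1..q-1}) = q - 1" using inj by (simp add: card_image)
    ultimately show False using card_poly_roots_bound[OF D0] by linarith
  qed
  have "poly A 1 = of_nat q" by (simp add: A_def poly_sum poly_monom)
  moreover have "poly B 1 = (\<Prod>k\<in>{1..q-1}. (1 - \<omega> ^ k))" by (simp add: B_def poly_prod)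
  ultimately show ?thesis using \<open>A = B\<close> by simp
qed

lemma prod_roots_unity':
  fixes \<omega> :: complex
  assumes q: "prime q" "odd q" and w: "\<omega> ^ q = 1" "\<omega> \<noteq> 1"
  shows "(\<Prod>k\<in>{1..q-1}. (\<omega> ^ k - 1)) = of_nat q"
proof -
  have "(\<Prod>k\<in>{1..q-1}. (\<omega> ^ k - 1)) = (\<Prod>k\<in>{1..q-1}. - (1 - \<omega> ^ k))" by simp
  also have "\<dots> = (-1) ^ card {1..q-1} * (\<Prod>k\<in>{1..q-1}. (1 - \<omega> ^ k))" by (rule prod_uminus)
  also have "(-1 :: complex) ^ card {1..q-1} = 1" using q by simp
  finally show ?thesis using prod_roots_unity[OF q(1) w] by simp
qed

lemma mq_prod:
  assumes "finite A" "\<And>i. i \<in> A \<Longrightarrow> mq p q (f i)"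
  shows "\<exists>w\<in>Zz p. prod f A = of_nat q ^ card A * w"
  using assms
proof (induction A rule: finite_induct)
  case empty thus ?case using Zz_1 by force
next
  case (insert x F)
  then obtain w where w: "w \<in> Zz p" "prod f F = of_nat q ^ card F * w" by blast
  obtain a where a: "a \<in> Zz p" "f x = of_nat q * a" using insert(4)[of x] unfolding mq_def by blast
  have "prod f (insert x F) = of_nat q ^ card (insert x F) * (a * w)"
    using insert(1,2) by (simp add: a w mult_ac)
  thus ?case using Zz_mult[OF a(1) w(1)] by blast
qed

lemma K_step:
  assumes p: "prime p" and q: "prime q" "odd q" and pq: "p \<noteq> q"
    and uv: "u \<in> Zz p" "v \<in> Zz p" "v \<noteq> 0" "u ^ q = v ^ q" "u \<noteq> v"
  shows "mq p q u \<and> mq p q v"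
proof -
  define Q where "Q = q ^ (p - 1)"
  have p2: "p \<ge> 2" using p prime_ge_2_nat by auto
  have q3: "q \<ge> 3" using q prime_ge_2_nat[OF q(1)] by (cases "q = 2") auto
  define \<omega> where "\<omega> = u / v"
  have u\<omega>: "u = \<omega> * v" using uv(3) by (simp add: \<omega>_def)
  have wq: "\<omega> ^ q = 1" using uv(3,4) by (simp add: \<omega>_def power_divide)
  have w1: "\<omega> \<noteq> 1" using uv(5) u\<omega> by auto
  have wQ: "\<omega> ^ Q = 1"
  proof -
    have "Q = q * q ^ (p - 2)" using p2 by (simp add: Q_def power_Suc[symmetric] Suc_diff_Suc numeral_2_eq_2)
    hence "\<omega> ^ Q = (\<omega> ^ q) ^ (q ^ (p - 2))" by (simp add: power_mult)
    thus ?thesis using wq by simp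
  qed
  define V1 where "V1 = v ^ (q - 1)"
  have V1Z: "V1 \<in> Zz p" unfolding V1_def by (rule Zz_pow[OF uv(2)])
  define X where "X = (\<lambda>k. u ^ k * v ^ (q - 1 - k))"
  have XZ: "X k \<in> Zz p" for k unfolding X_def by (intro Zz_mult Zz_pow uv)
  have Xw: "X k = \<omega> ^ k * V1" if "k \<le> q - 1" for k
  proof -
    have "X k = \<omega> ^ k * (v ^ k * v ^ (q - 1 - k))" by (simp add: X_def u\<omega> power_mult_distrib mult_ac)
    also have "k + (q - 1 - k) = q - 1" using that by simp
    hence "v ^ k * v ^ (q - 1 - k) = V1" unfolding V1_def by (metis power_add)
    finally show ?thesis .
  qed
  have Xmq: "mq p q (X k - V1)" if k: "k \<in> {1..q-1}" for k
  proof -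
    have "X k ^ Q = (\<omega> ^ Q) ^ k * V1 ^ Q" using k
      by (simp add: Xw power_mult_distrib power_mult[symmetric] mult.commute)
    hence XQ: "X k ^ Q = V1 ^ Q" using wQ by simp
    have 1: "mq p q (X k ^ Q - X k)" unfolding Q_def by (rule frob_Zz[OF p q pq XZ])
    have 2: "mq p q (V1 ^ Q - V1)" unfolding Q_def by (rule frob_Zz[OF p q pq V1Z])
    have "X k - V1 = (V1 ^ Q - V1) - (X k ^ Q - X k)" using XQ by simp
    thus ?thesis using mq_diff[OF 2 1] by simp
  qed
  have "(\<Prod>k\<in>{1..q-1}. (X k - V1)) = (\<Prod>k\<in>{1..q-1}. (\<omega> ^ k - 1) * V1)"
    by (rule prod.cong) (auto simp: Xw algebra_simps)
  also have "\<dots> = (\<Prod>k\<in>{1..q-1}. (\<omega> ^ k - 1)) * V1 ^ (q - 1)"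
    by (simp add: prod.distrib)
  also have "\<dots> = of_nat q * V1 ^ (q - 1)" using prod_roots_unity'[OF q wq w1] by simp
  finally have pe: "(\<Prod>k\<in>{1..q-1}. (X k - V1)) = of_nat q * V1 ^ (q - 1)" .
  obtain w where w: "w \<in> Zz p" "(\<Prod>k\<in>{1..q-1}. (X k - V1)) = of_nat q ^ card {1..q-1} * w"
    using mq_prod[of "{1..q-1}" p q "\<lambda>k. X k - V1"] Xmq by blast
  have "of_nat q * V1 ^ (q - 1) = of_nat q * (of_nat q * (of_nat q ^ (q - 3) * w))"
  proof -
    have "card {1..q-1} = Suc (Suc (q - 3))" using q3 by simp
    thus ?thesis using pe w(2) by (simp add: mult_ac)
  qed
  hence "V1 ^ (q - 1) = of_nat q * (of_nat q ^ (q - 3) * w)" using q3 by simp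
  hence mVN: "mq p q (v ^ ((q - 1) * (q - 1)))"
    unfolding V1_def power_mult[symmetric] by (metis mq_of_nat Zz_mult Zz_pow Zz_nat w(1))
  define N where "N = (q - 1) * (q - 1)"
  have Q2: "Q \<ge> 2" unfolding Q_def using q3 p2
    by (metis one_less_power Suc_1 Suc_le_eq diff_is_0_eq' le_trans not_less_eq_eq numeral_le_iff semiring_norm(72) zero_less_diff order_less_le_trans less_imp_le numeral_3_eq_3 lessI)
  have "N < 2 ^ N" by (rule less_exp)
  also have "\<dots> \<le> Q ^ N" using Q2 by (rule power_mono) simp
  finally have NQ: "N \<le> Q ^ N" by simp
  have "v ^ (Q ^ N) = v ^ N * v ^ (Q ^ N - N)" using NQ by (simp add: power_add[symmetric])
  hence m1: "mq p q (v ^ (Q ^ N))" using mq_multR[OF mVN[folded N_def] Zz_pow[OF uv(2)]] by simp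
  have m2: "mq p q (v ^ (Q ^ N) - v)" unfolding Q_def by (rule frob_iter[OF p q pq uv(2)])
  have mv: "mq p q v" using mq_diff[OF m1 m2] by simp
  have "u ^ Q = v ^ Q" using wQ by (simp add: u\<omega> power_mult_distrib)
  moreover have "mq p q (u ^ Q - u)" unfolding Q_def by (rule frob_Zz[OF p q pq uv(1)])
  moreover have "mq p q (v ^ Q - v)" unfolding Q_def by (rule frob_Zz[OF p q pq uv(2)])
  ultimately have "mq p q (u - v)" using mq_diff by (metis diff_diff_eq2 diff_add_cancel add_diff_cancel_left' minus_diff_eq mq_minus)
  hence "mq p q u" using mq_add[OF _ mv] by fastforce
  thus ?thesis using mv by simp
qed

lemma Zz_reduce:
  assumes p: "prime p" and x: "x \<in> Zz p"
  shows "\<exists>r. x = poly (map_poly of_int r) (zeta p) \<and> degree r < p - 1"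
proof -
  have p1: "p > 1" using p prime_gt_1_nat by auto
  obtain R where R: "x = poly (map_poly of_int R) (zeta p)" using Zz_poly[OF x] by blast
  have "coeff (cycp p) 0 = 1" using p1 by (simp add: coeff_cycp)
  hence cn: "cycp p \<noteq> 0" by auto
  have lc: "coeff (cycp p) (degree (cycp p)) = 1" using p1 by (simp add: degree_cycp coeff_cycp)
  obtain Qt r where qr: "pseudo_divmod R (cycp p) = (Qt, r)" by (metis surj_pair)
  have eq: "R = cycp p * Qt + r" using pseudo_divmod(1)[OF cn qr] lc by simp
  have dr: "r = 0 \<or> degree r < degree (cycp p)" using pseudo_divmod(2)[OF cn qr] .
  have "x = poly (map_poly of_int r) (zeta p)"
    using R by (simp add: eq mpi_add mpi_mult cycp_root[OF p1])
  moreover have "degree r < p - 1" using dr degree_cycp[of p] p1 by auto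
  ultimately show ?thesis by blast
qed

lemma Zz_not_all_div:
  assumes p: "prime p" and q: "prime q" and x: "x \<in> Zz p" "x \<noteq> 0"
  shows "\<exists>j. \<not> (\<exists>w\<in>Zz p. x = of_nat q ^ j * w)"
proof -
  have q2: "q \<ge> 2" using q prime_ge_2_nat by auto
  obtain rx where rx: "x = poly (map_poly of_int rx) (zeta p)" "degree rx < p - 1"
    using Zz_reduce[OF p x(1)] by blast
  have "rx \<noteq> 0" using rx x(2) by auto
  then obtain i where ci: "coeff rx i \<noteq> 0" using leading_coeff_0_iff by blast
  define c where "c = coeff rx i"
  define j where "j = nat \<bar>c\<bar>"
  have "j < 2 ^ j" by (rule less_exp)
  also have "\<dots> \<le> q ^ j" using q2 by (rule power_mono) simp
  finally have jq: "int j < int q ^ j" by (metis of_nat_less_iff of_nat_power)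
  show ?thesis
  proof (rule exI[of _ j], rule notI)
    assume "\<exists>w\<in>Zz p. x = of_nat q ^ j * w"
    then obtain w where w: "w \<in> Zz p" "x = of_nat q ^ j * w" by blast
    obtain rw where rw: "w = poly (map_poly of_int rw) (zeta p)" "degree rw < p - 1"
      using Zz_reduce[OF p w(1)] by blast
    define D where "D = rx - smult (int q ^ j) rw"
    have "poly (map_poly of_int D) (zeta p) = x - of_nat q ^ j * w"
      by (simp add: D_def mpi_diff mpi_smult rx(1) rw(1))
    hence D0: "poly (map_poly of_int D) (zeta p) = 0" using w(2) by simp
    have "degree D < p - 1" unfolding D_def
      by (rule degree_diff_less[OF rx(2)]) (use rw(2) degree_smult_le le_less_trans in blast)
    hence "D = 0" using indep[OF p _ D0] by (meson not_le)
    hence "c = int q ^ j * coeff rw i" by (simp add: D_def c_def)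
    hence "int q ^ j dvd c" by simp
    hence "\<bar>int q ^ j\<bar> \<le> \<bar>c\<bar>" using ci c_def by (intro dvd_imp_le_int) auto
    hence "int q ^ j \<le> \<bar>c\<bar>" by simp
    thus False using jq j_def by simp
  qed
qed

lemma K_lemma:
  assumes p: "prime p" and q: "prime q" "odd q" and pq: "p \<noteq> q"
    and uv: "u \<in> Zz p" "v \<in> Zz p" "v \<noteq> 0" "u ^ q = v ^ q"
  shows "u = v"
proof (rule ccontr)
  assume ne: "u \<noteq> v"
  have q0: "(of_nat q :: complex) \<noteq> 0" using q prime_gt_0_nat by simp
  have main: "\<And>u v. u \<in> Zz p \<Longrightarrow> v \<in> Zz p \<Longrightarrow> v \<noteq> 0 \<Longrightarrow> u ^ q = v ^ q \<Longrightarrow> u \<noteq> v \<Longrightarrow>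
      \<exists>w\<in>Zz p. v = of_nat q ^ j * w" for j
  proof (induction j)
    case 0 thus ?case by auto
  next
    case (Suc j u v)
    have "mq p q u \<and> mq p q v" by (rule K_step[OF p q pq Suc.prems])
    then obtain u' v' where u': "u' \<in> Zz p" "u = of_nat q * u'" and v': "v' \<in> Zz p" "v = of_nat q * v'"
      unfolding mq_def by blast
    have "v' \<noteq> 0" using v' Suc.prems(3) by auto
    moreover have "u' ^ q = v' ^ q"
    proof -
      have "of_nat q ^ q * u' ^ q = of_nat q ^ q * v' ^ q"
        using Suc.prems(4) by (simp add: u'(2) v'(2) power_mult_distrib)
      thus ?thesis using q0 by simp
    qed
    moreover have "u' \<noteq> v'" using Suc.prems(5) u' v' by auto
    ultimately obtain w where w: "w \<in> Zz p" "v' = of_nat q ^ j * w" using Suc.IH u'(1) v'(1) by blast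
    have "v = of_nat q ^ Suc j * w" by (simp add: v'(2) w(2))
    thus ?case using w(1) by blast
  qed
  obtain j where "\<not> (\<exists>w\<in>Zz p. v = of_nat q ^ j * w)" using Zz_not_all_div[OF p q(1) uv(2,3)] by blast
  thus False using main[OF uv ne] by blast
qed

lemma Qz_iff: "x \<in> Qzeta p \<longleftrightarrow> (\<exists>c :: nat \<Rightarrow> rat. x = (\<Sum>k<p. of_rat (c k) * zeta p ^ k))"
  by (simp add: Qzeta_def)

lemma Qz_0: "0 \<in> Qzeta p"
  unfolding Qz_iff by (rule exI[of _ "\<lambda>_. 0"]) simp

lemma Qz_add: "x \<in> Qzeta p \<Longrightarrow> y \<in> Qzeta p \<Longrightarrow> x + y \<in> Qzeta p"
proof -
  assume "x \<in> Qzeta p" "y \<in> Qzeta p"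
  then obtain c d where "x = (\<Sum>k<p. of_rat (c k) * zeta p ^ k)" "y = (\<Sum>k<p. of_rat (d k) * zeta p ^ k)"
    unfolding Qz_iff by blast
  thus ?thesis unfolding Qz_iff
    by (intro exI[of _ "\<lambda>k. c k + d k"]) (simp add: of_rat_add distrib_right sum.distrib)
qed

lemma Qz_rmult: "x \<in> Qzeta p \<Longrightarrow> of_rat r * x \<in> Qzeta p"
proof -
  assume "x \<in> Qzeta p"
  then obtain c where "x = (\<Sum>k<p. of_rat (c k) * zeta p ^ k)" unfolding Qz_iff by blast
  thus ?thesis unfolding Qz_iff
    by (intro exI[of _ "\<lambda>k. r * c k"]) (simp add: of_rat_mult sum_distrib_left mult_ac)
qed

lemma Qz_sum: "(\<And>i. i \<in> A \<Longrightarrow> f i \<in> Qzeta p) \<Longrightarrow> sum f A \<in> Qzeta p"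
  by (induction A rule: infinite_finite_induct) (auto intro: Qz_0 Qz_add)

lemma Qz_zpow: assumes "p > 0" shows "zeta p ^ m \<in> Qzeta p"
proof -
  have "(\<Sum>k<p. of_rat (if k = m mod p then 1 else 0) * zeta p ^ k) = (\<Sum>k<p. if k = m mod p then zeta p ^ k else 0)"
    by (rule sum.cong) auto
  also have "\<dots> = zeta p ^ (m mod p)" using assms by (simp add: sum.delta)
  also have "\<dots> = zeta p ^ m" using zeta_pow_mod[OF assms] by simp
  finally show ?thesis unfolding Qz_iff by (intro exI[of _ "\<lambda>k. if k = m mod p then 1 else 0"]) simp
qed

lemma Qz_rat: assumes "p > 0" shows "of_rat r \<in> Qzeta p"
  using Qz_rmult[OF Qz_zpow[OF assms, of 0], of r] by simp

lemma Qz_mult: assumes p: "p > 0" and x: "x \<in> Qzeta p" and y: "y \<in> Qzeta p" shows "x * y \<in> Qzeta p"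
proof -
  obtain c where c: "x = (\<Sum>k<p. of_rat (c k) * zeta p ^ k)" using x unfolding Qz_iff by blast
  obtain d where d: "y = (\<Sum>k<p. of_rat (d k) * zeta p ^ k)" using y unfolding Qz_iff by blast
  have "x * y = (\<Sum>k<p. \<Sum>j<p. of_rat (c k * d j) * zeta p ^ (k + j))"
    by (simp add: c d sum_product of_rat_mult power_add mult_ac)
  also have "\<dots> \<in> Qzeta p" by (intro Qz_sum Qz_rmult Qz_zpow p)
  finally show ?thesis .
qed

lemma Qz_diff: assumes "p > 0" "x \<in> Qzeta p" "y \<in> Qzeta p" shows "x - y \<in> Qzeta p"
  using Qz_add[OF assms(2) Qz_rmult[OF assms(3), of "-1"]] by simp

lemma Qz_pow: assumes "p > 0" "x \<in> Qzeta p" shows "x ^ n \<in> Qzeta p"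
  by (induction n) (use Qz_rat[OF assms(1), of 1] Qz_mult assms in auto)

lemma Qz_prod: assumes "p > 0" shows "(\<And>i. i \<in> A \<Longrightarrow> f i \<in> Qzeta p) \<Longrightarrow> prod f A \<in> Qzeta p"
  by (induction A rule: infinite_finite_induct) (use Qz_rat[OF assms(1), of 1] Qz_mult assms in auto)

lemma zeta_norm: "norm (zeta p) = 1" by (simp add: zeta_def)

lemma cnj_root1: assumes "norm (z::complex) = 1" shows "cnj z = inverse z"
proof -
  have "z * cnj z = 1" using assms by (simp add: complex_norm_square[symmetric])
  thus ?thesis by (metis inverse_unique)
qed

lemma cnj_zeta: assumes "p > 0" shows "cnj (zeta p) = zeta p ^ (p - 1)"
proof -
  have "zeta p ^ (p - 1) * zeta p = 1" using zeta_p[OF assms] assms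
    by (metis power_Suc2 Suc_diff_1)
  hence "zeta p ^ (p - 1) = inverse (zeta p)" by (metis inverse_unique mult.commute)
  thus ?thesis using cnj_root1[OF zeta_norm] by simp
qed

lemma cnj_of_rat [simp]: "cnj (of_rat r :: complex) = of_rat r"
proof -
  obtain a b where ab: "quotient_of r = (a, b)" by (metis surj_pair)
  have "(of_rat r :: complex) = of_int a / of_int b"
    using quotient_of_div[OF ab] by (simp add: of_rat_divide)
  thus ?thesis by simp
qed

lemma Qz_cnj: assumes p: "p > 0" and x: "x \<in> Qzeta p" shows "cnj x \<in> Qzeta p"
proof -
  obtain c where c: "x = (\<Sum>k<p. of_rat (c k) * zeta p ^ k)" using x unfolding Qz_iff by blast
  have "cnj x = (\<Sum>k<p. of_rat (c k) * zeta p ^ ((p - 1) * k))"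
    by (simp add: c cnj_zeta[OF p] power_mult)
  also have "\<dots> \<in> Qzeta p" by (intro Qz_sum Qz_rmult Qz_zpow p)
  finally show ?thesis .
qed

lemma Zz_cnj: assumes p: "p > 0" and x: "x \<in> Zz p" shows "cnj x \<in> Zz p"
  using x
proof (induction rule: Zz.induct)
  case Zz_zeta thus ?case using cnj_zeta[OF p] zeta_Zz_pow by simp
next
  case (Zz_int m) thus ?case using Zz.Zz_int by simp
next
  case (Zz_add x y) thus ?case using Zz.Zz_add by simp
next
  case (Zz_mult x y) thus ?case using Zz.Zz_mult by simp
qed

lemma rat_denom: "\<exists>D::int. D > 0 \<and> (\<forall>k\<in>A. \<exists>m::int. of_int D * c k = (of_int m :: rat))" if "finite A"
  using that
proof (induction A rule: finite_induct)
  case empty thus ?case by (intro exI[of _ 1]) simp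
next
  case (insert a A)
  then obtain D where D: "D > 0" "\<forall>k\<in>A. \<exists>m::int. of_int D * c k = of_int m" by blast
  obtain num den where nd: "quotient_of (c a) = (num, den)" by (metis surj_pair)
  have den: "den > 0" using quotient_of_denom_pos[OF nd] .
  have ca: "c a = of_int num / of_int den" using quotient_of_div[OF nd] .
  have all: "\<exists>m::int. of_int (D * den) * c k = of_int m" if k: "k \<in> insert a A" for k
  proof (cases "k = a")
    case True
    thus ?thesis using den by (intro exI[of _ "D * num"]) (simp add: ca)
  next
    case False
    hence "k \<in> A" using k by simp
    then obtain m where "of_int D * c k = of_int m" using D by blast
    thus ?thesis by (intro exI[of _ "m * den"]) (simp add: mult_ac)
  qed
  have "D * den > 0" using D den by simp
  thus ?case using all by blast
qed

lemma Qz_Zz: assumes x: "x \<in> Qzeta p" shows "\<exists>D::int. D > 0 \<and> of_int D * x \<in> Zz p"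
proof -
  obtain c where c: "x = (\<Sum>k<p. of_rat (c k) * zeta p ^ k)" using x unfolding Qz_iff by blast
  obtain D where D: "D > 0" "\<forall>k\<in>{..<p}. \<exists>m::int. of_int D * c k = of_int m"
    using rat_denom[of "{..<p}" c] by auto
  obtain m where m: "\<And>k. k < p \<Longrightarrow> of_int D * c k = of_int (m k)" using D(2) by (metis lessThan_iff)
  have "of_int D * x = (\<Sum>k<p. of_rat (of_int D * c k) * zeta p ^ k)"
    by (simp add: c sum_distrib_left of_rat_mult mult_ac)
  also have "\<dots> = (\<Sum>k<p. of_int (m k) * zeta p ^ k)"
    by (rule sum.cong) (simp_all add: m)
  also have "\<dots> \<in> Zz p" by (intro Zz_sum Zz_mult Zz.Zz_int zeta_Zz_pow)
  finally show ?thesis using D(1) by blast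
qed

lemma real_lemma:
  assumes p: "prime p" and q: "prime q" "odd q" and pq: "p \<noteq> q"
    and b: "\<beta> \<in> Qzeta p" and bq: "cnj (\<beta> ^ q) = \<beta> ^ q"
  shows "cnj \<beta> = \<beta>"
proof -
  have p0: "p > 0" using p prime_gt_0_nat by auto
  obtain D where D: "D > 0" "of_int D * \<beta> \<in> Zz p" using Qz_Zz[OF b] by blast
  define u where "u = of_int D * \<beta>"
  have uZ: "u \<in> Zz p" using D by (simp add: u_def)
  have vZ: "cnj u \<in> Zz p" by (rule Zz_cnj[OF p0 uZ])
  have "cnj u ^ q = cnj (u ^ q)" by simp
  also have "\<dots> = u ^ q" using bq by (simp add: u_def power_mult_distrib)
  finally have uv: "cnj u ^ q = u ^ q" .
  show ?thesis
  proof (cases "u = 0")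
    case True thus ?thesis using D(1) by (simp add: u_def)
  next
    case False
    have "cnj u = u" by (rule K_lemma[OF p q pq vZ uZ False uv])
    thus ?thesis using D(1) by (simp add: u_def)
  qed
qed

definition QP :: "nat \<Rightarrow> nat \<Rightarrow> complex set" where
  "QP p m = {z. \<exists>c :: nat \<Rightarrow> rat. z = (\<Sum>k<m. of_rat (c k) * (zeta p + inverse (zeta p)) ^ k)}"

lemma QP_Qzp: "QP p p = Qzeta_plus p" by (simp add: QP_def Qzeta_plus_def)

lemma QP_0: "0 \<in> QP p m" unfolding QP_def by (rule CollectI, rule exI[of _ "\<lambda>_. 0"]) simp

lemma QP_add: "x \<in> QP p m \<Longrightarrow> y \<in> QP p m \<Longrightarrow> x + y \<in> QP p m"
proof -
  assume "x \<in> QP p m" "y \<in> QP p m"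
  then obtain c d where "x = (\<Sum>k<m. of_rat (c k) * (zeta p + inverse (zeta p)) ^ k)"
      "y = (\<Sum>k<m. of_rat (d k) * (zeta p + inverse (zeta p)) ^ k)"
    unfolding QP_def by blast
  thus ?thesis unfolding QP_def
    by (intro CollectI exI[of _ "\<lambda>k. c k + d k"]) (simp add: of_rat_add distrib_right sum.distrib)
qed

lemma QP_rmult: "x \<in> QP p m \<Longrightarrow> of_rat r * x \<in> QP p m"
proof -
  assume "x \<in> QP p m"
  then obtain c where "x = (\<Sum>k<m. of_rat (c k) * (zeta p + inverse (zeta p)) ^ k)" unfolding QP_def by blast
  thus ?thesis unfolding QP_def
    by (intro CollectI exI[of _ "\<lambda>k. r * c k"]) (simp add: of_rat_mult sum_distrib_left mult_ac)
qed

lemma QP_sum: "(\<And>i. i \<in> A \<Longrightarrow> f i \<in> QP p m) \<Longrightarrow> sum f A \<in> QP p m"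
  by (induction A rule: infinite_finite_induct) (auto intro: QP_0 QP_add)

lemma QP_diff: "x \<in> QP p m \<Longrightarrow> y \<in> QP p m \<Longrightarrow> x - y \<in> QP p m"
  using QP_add[OF _ QP_rmult[of y p m "-1"]] by simp

lemma QP_mono: assumes "m \<le> m'" "x \<in> QP p m" shows "x \<in> QP p m'"
proof -
  obtain c where c: "x = (\<Sum>k<m. of_rat (c k) * (zeta p + inverse (zeta p)) ^ k)" using assms(2) unfolding QP_def by blast
  have "x = (\<Sum>k<m'. of_rat (if k < m then c k else 0) * (zeta p + inverse (zeta p)) ^ k)"
  proof -
    have "(\<Sum>k<m'. of_rat (if k < m then c k else 0) * (zeta p + inverse (zeta p)) ^ k)
        = (\<Sum>k<m'. if k < m then of_rat (c k) * (zeta p + inverse (zeta p)) ^ k else 0)"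
      by (rule sum.cong) auto
    also have "\<dots> = (\<Sum>k\<in>{..<m'} \<inter> {k. k < m}. of_rat (c k) * (zeta p + inverse (zeta p)) ^ k)"
      by (simp add: sum.inter_restrict)
    also have "{..<m'} \<inter> {k. k < m} = {..<m}" using assms(1) by auto
    finally show ?thesis using c by simp
  qed
  thus ?thesis unfolding QP_def by (intro CollectI exI[of _ "\<lambda>k. if k < m then c k else 0"])
qed

lemma QP_eta: assumes "x \<in> QP p m" shows "(zeta p + inverse (zeta p)) * x \<in> QP p (Suc m)"
proof -
  let ?e = "zeta p + inverse (zeta p)"
  obtain c where c: "x = (\<Sum>k<m. of_rat (c k) * ?e ^ k)" using assms unfolding QP_def by blast
  define d where "d = (\<lambda>k. if k = 0 then 0 else c (k - 1))"
  have "(\<Sum>k<Suc m. of_rat (d k) * ?e ^ k) = of_rat (d 0) * ?e ^ 0 + (\<Sum>k<m. of_rat (d (Suc k)) * ?e ^ Suc k)"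
    by (rule sum.lessThan_Suc_shift)
  also have "\<dots> = ?e * x" by (simp add: d_def c sum_distrib_left mult_ac)
  finally show ?thesis unfolding QP_def by (intro CollectI exI[of _ d]) simp
qed

lemma cheb: "zeta p ^ k + inverse (zeta p) ^ k \<in> QP p (Suc k)"
proof (induction k rule: less_induct)
  case (less k)
  let ?e = "zeta p + inverse (zeta p)"
  consider "k = 0" | "k = 1" | j where "k = Suc (Suc j)" by (metis One_nat_def not0_implies_Suc)
  thus ?case
  proof cases
    case 1
    show ?thesis unfolding QP_def 1 by (intro CollectI exI[of _ "\<lambda>_. 2"]) simp
  next
    case 2
    show ?thesis unfolding QP_def 2 by (intro CollectI exI[of _ "\<lambda>k. if k = 1 then 1 else 0"]) (simp add: lessThan_Suc)
  next
    case 3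
    have z0: "zeta p \<noteq> 0" by (rule zeta_ne0)
    have eq: "zeta p ^ k + inverse (zeta p) ^ k = ?e * (zeta p ^ Suc j + inverse (zeta p) ^ Suc j) - (zeta p ^ j + inverse (zeta p) ^ j)"
      using 3 z0 by (simp add: field_simps power_Suc)
    have a: "?e * (zeta p ^ Suc j + inverse (zeta p) ^ Suc j) \<in> QP p (Suc k)"
      using QP_eta[OF less[of "Suc j"]] 3 by simp
    have b: "zeta p ^ j + inverse (zeta p) ^ j \<in> QP p (Suc k)"
      using QP_mono[OF _ less[of j]] 3 by simp
    show ?thesis unfolding eq by (rule QP_diff[OF a b])
  qed
qed

lemma Qzp_real:
  assumes p: "p > 0" and x: "x \<in> Qzeta p" and r: "cnj x = x"
  shows "x \<in> Qzeta_plus p"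
proof -
  obtain c where c: "x = (\<Sum>k<p. of_rat (c k) * zeta p ^ k)" using x unfolding Qz_iff by blast
  have ci: "cnj (zeta p) = inverse (zeta p)" using cnj_root1[OF zeta_norm] .
  have "cnj x = (\<Sum>k<p. of_rat (c k) * inverse (zeta p) ^ k)" by (simp add: c ci)
  hence "x = (x + cnj x) / 2" using r by simp
  also have "\<dots> = (\<Sum>k<p. (of_rat (c k) * zeta p ^ k + of_rat (c k) * inverse (zeta p) ^ k)) / 2"
    by (simp add: c ci sum.distrib)
  also have "\<dots> = (\<Sum>k<p. of_rat (c k / 2) * (zeta p ^ k + inverse (zeta p) ^ k))"
    unfolding sum_divide_distrib by (rule sum.cong) (simp_all add: of_rat_divide field_simps)
  also have "\<dots> \<in> QP p p"
    by (intro QP_sum QP_rmult QP_mono[OF _ cheb]) auto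
  finally show ?thesis by (simp add: QP_Qzp)
qed

lemma gal_add: "\<sigma> \<in> gal p \<Longrightarrow> x \<in> Qzeta p \<Longrightarrow> y \<in> Qzeta p \<Longrightarrow> \<sigma> (x + y) = \<sigma> x + \<sigma> y"
  unfolding gal_def by blast
lemma gal_mult: "\<sigma> \<in> gal p \<Longrightarrow> x \<in> Qzeta p \<Longrightarrow> y \<in> Qzeta p \<Longrightarrow> \<sigma> (x * y) = \<sigma> x * \<sigma> y"
  unfolding gal_def by blast
lemma gal_one: "\<sigma> \<in> gal p \<Longrightarrow> \<sigma> 1 = 1"
  unfolding gal_def by blast
lemma gal_in: "\<sigma> \<in> gal p \<Longrightarrow> x \<in> Qzeta p \<Longrightarrow> \<sigma> x \<in> Qzeta p"
  unfolding gal_def using bij_betwE by blast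

lemma gal_zero: assumes "\<sigma> \<in> gal p" shows "\<sigma> 0 = 0"
proof -
  have "\<sigma> (0 + 0) = \<sigma> 0 + \<sigma> 0" by (rule gal_add[OF assms Qz_0 Qz_0])
  thus ?thesis by simp
qed

lemma gal_of_nat: assumes "\<sigma> \<in> gal p" "p > 0" shows "\<sigma> (of_nat n) = of_nat n"
proof (induction n)
  case 0 thus ?case using gal_zero[OF assms(1)] by simp
next
  case (Suc n)
  have "of_nat n \<in> Qzeta p" using Qz_rat[OF assms(2), of "of_nat n"] by simp
  moreover have "(1::complex) \<in> Qzeta p" using Qz_rat[OF assms(2), of 1] by simp
  ultimately have "\<sigma> (of_nat n + 1) = \<sigma> (of_nat n) + \<sigma> 1" by (rule gal_add[OF assms(1)])
  thus ?case using Suc gal_one[OF assms(1)] by (simp add: add.commute)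
qed

lemma gal_minus: assumes "\<sigma> \<in> gal p" "p > 0" "x \<in> Qzeta p" shows "\<sigma> (- x) = - \<sigma> x"
proof -
  have mx: "- x \<in> Qzeta p" using Qz_rmult[OF assms(3), of "-1"] by simp
  have "\<sigma> (x + - x) = \<sigma> x + \<sigma> (- x)" by (rule gal_add[OF assms(1,3) mx])
  thus ?thesis using gal_zero[OF assms(1)] by (simp add: eq_neg_iff_add_eq_0 add.commute)
qed

lemma gal_of_int: assumes "\<sigma> \<in> gal p" "p > 0" shows "\<sigma> (of_int m) = of_int m"
proof (cases "m \<ge> 0")
  case True
  then obtain n where "m = int n" by (metis nonneg_eq_int)
  thus ?thesis using gal_of_nat[OF assms] by simp
next
  case False
  define n where "n = nat (- m)"
  have m: "(of_int m :: complex) = - of_nat n" using False by (simp add: n_def)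
  have "of_nat n \<in> Qzeta p" using Qz_rat[OF assms(2), of "of_nat n"] by simp
  thus ?thesis unfolding m using gal_minus[OF assms] gal_of_nat[OF assms] by simp
qed

lemma gal_of_rat: assumes s: "\<sigma> \<in> gal p" and p: "p > 0" shows "\<sigma> (of_rat r) = of_rat r"
proof -
  obtain a b where ab: "quotient_of r = (a, b)" by (metis surj_pair)
  have b: "b > 0" using quotient_of_denom_pos[OF ab] .
  have r: "r = of_int a / of_int b" using quotient_of_div[OF ab] .
  have "of_int b * of_rat r = (of_int a :: complex)" using b by (simp add: r of_rat_divide)
  hence "\<sigma> (of_int b * of_rat r) = of_int a" using gal_of_int[OF s p] by simp
  moreover have "\<sigma> (of_int b * of_rat r) = of_int b * \<sigma> (of_rat r)"
    using gal_mult[OF s Qz_rat[OF p, of "of_int b"] Qz_rat[OF p, of r]] gal_of_int[OF s p] by simp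
  ultimately have "\<sigma> (of_rat r) = of_int a / of_int b" using b by (simp add: field_simps)
  thus ?thesis by (simp add: r of_rat_divide)
qed

lemma gal_pow: assumes s: "\<sigma> \<in> gal p" and p: "p > 0" and x: "x \<in> Qzeta p" shows "\<sigma> (x ^ n) = \<sigma> x ^ n"
proof (induction n)
  case 0 thus ?case using gal_one[OF s] by simp
next
  case (Suc n) thus ?case using gal_mult[OF s x Qz_pow[OF p x]] by simp
qed

lemma gal_prod: assumes s: "\<sigma> \<in> gal p" and p: "p > 0"
  shows "(\<And>i. i \<in> A \<Longrightarrow> f i \<in> Qzeta p) \<Longrightarrow> \<sigma> (prod f A) = (\<Prod>i\<in>A. \<sigma> (f i))"
proof (induction A rule: infinite_finite_induct)
  case (infinite A) thus ?case using gal_one[OF s] by simp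
next
  case empty thus ?case using gal_one[OF s] by simp
next
  case (insert x F)
  have "\<sigma> (f x * prod f F) = \<sigma> (f x) * \<sigma> (prod f F)"
    using insert by (intro gal_mult[OF s] Qz_prod[OF p]) auto
  thus ?case using insert by simp
qed

lemma gal_zeta_p: assumes s: "\<sigma> \<in> gal p" and p: "p > 0" shows "\<sigma> (zeta p) ^ p = 1"
  using gal_pow[OF s p Qz_zpow[OF p, of 1], of p] zeta_p[OF p] gal_one[OF s] by simp

definition fpsmap :: "('a \<Rightarrow> 'a) \<Rightarrow> 'a fps \<Rightarrow> 'a fps" where
  "fpsmap h F = Abs_fps (\<lambda>k. h (F $ k))"

lemma hom_sum:
  assumes S: "\<And>x y. x \<in> S \<Longrightarrow> y \<in> S \<Longrightarrow> x + y \<in> S" "0 \<in> S"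
    and h: "\<And>x y. x \<in> S \<Longrightarrow> y \<in> S \<Longrightarrow> h (x + y) = h x + h y" "h 0 = 0"
  shows "(\<And>i. i \<in> I \<Longrightarrow> f i \<in> S) \<Longrightarrow> sum f I \<in> S \<and> h (sum f I) = (\<Sum>i\<in>I. h (f i))"
proof (induction I rule: infinite_finite_induct)
  case (insert x F) thus ?case using S h by simp
qed (use S h in auto)

lemma fps_hom_mult:
  fixes h :: "'a::comm_ring_1 \<Rightarrow> 'a" and A B :: "'a fps"
  assumes S: "\<And>x y. x \<in> S \<Longrightarrow> y \<in> S \<Longrightarrow> x + y \<in> S" "\<And>x y. x \<in> S \<Longrightarrow> y \<in> S \<Longrightarrow> x * y \<in> S" "0 \<in> S"
    and h: "\<And>x y. x \<in> S \<Longrightarrow> y \<in> S \<Longrightarrow> h (x + y) = h x + h y"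
       "\<And>x y. x \<in> S \<Longrightarrow> y \<in> S \<Longrightarrow> h (x * y) = h x * h y" "h 0 = 0"
    and A: "\<And>k. A $ k \<in> S" and B: "\<And>k. B $ k \<in> S"
  shows "(A * B) $ k \<in> S \<and> h ((A * B) $ k) = (fpsmap h A * fpsmap h B) $ k"
proof -
  have "(\<Sum>i = 0..k. A $ i * B $ (k - i)) \<in> S \<and> h (\<Sum>i = 0..k. A $ i * B $ (k - i)) = (\<Sum>i = 0..k. h (A $ i * B $ (k - i)))"
    by (rule hom_sum[OF S(1,3) h(1,3)]) (use S(2) A B in auto)
  thus ?thesis using h(2) A B by (simp add: fps_mult_nth fpsmap_def)
qed

lemma fps_hom_prod:
  fixes h :: "'a::comm_ring_1 \<Rightarrow> 'a" and F :: "'b \<Rightarrow> 'a fps"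
  assumes S: "\<And>x y. x \<in> S \<Longrightarrow> y \<in> S \<Longrightarrow> x + y \<in> S" "\<And>x y. x \<in> S \<Longrightarrow> y \<in> S \<Longrightarrow> x * y \<in> S" "0 \<in> S" "1 \<in> S"
    and h: "\<And>x y. x \<in> S \<Longrightarrow> y \<in> S \<Longrightarrow> h (x + y) = h x + h y"
       "\<And>x y. x \<in> S \<Longrightarrow> y \<in> S \<Longrightarrow> h (x * y) = h x * h y" "h 0 = 0" "h 1 = 1"
  shows "(\<And>a k. a \<in> I \<Longrightarrow> F a $ k \<in> S) \<Longrightarrow>
     (\<forall>k. (\<Prod>a\<in>I. F a) $ k \<in> S) \<and> fpsmap h (\<Prod>a\<in>I. F a) = (\<Prod>a\<in>I. fpsmap h (F a))"
proof (induction I rule: infinite_finite_induct)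
  case (infinite A)
  thus ?case using S h by (auto simp: fpsmap_def fps_eq_iff fps_one_nth)
next
  case empty
  thus ?case using S h by (auto simp: fpsmap_def fps_eq_iff fps_one_nth)
next
  case (insert x F')
  have IH: "\<forall>k. (\<Prod>a\<in>F'. F a) $ k \<in> S" "fpsmap h (\<Prod>a\<in>F'. F a) = (\<Prod>a\<in>F'. fpsmap h (F a))"
    using insert by auto
  have fx: "\<And>k. F x $ k \<in> S" using insert by auto
  have m: "(F x * (\<Prod>a\<in>F'. F a)) $ k \<in> S \<and> h ((F x * (\<Prod>a\<in>F'. F a)) $ k) = (fpsmap h (F x) * fpsmap h (\<Prod>a\<in>F'. F a)) $ k" for k
    by (rule fps_hom_mult[OF S(1-3) h(1-3) fx]) (use IH in auto)
  have "fpsmap h (F x * (\<Prod>a\<in>F'. F a)) = fpsmap h (F x) * fpsmap h (\<Prod>a\<in>F'. F a)"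
    using m by (simp add: fps_eq_iff fpsmap_def)
  thus ?case using insert m IH by simp
qed

lemma binom_nth: "binom_fps c r $ k = (r gchoose k) * (- c) ^ k"
  unfolding binom_fps_def by (rule fps_nth_Abs_fps)
lemma expo_rat: "(of_int m / of_nat q :: complex) = of_rat (of_int m / of_nat q)"
  by (simp only: of_rat_divide of_rat_of_int_eq of_rat_of_nat_eq)
lemma gchoose_of_rat: "(of_rat x gchoose k :: complex) = of_rat (x gchoose k)"
  unfolding gbinomial_altdef_of_nat of_rat_prod by (rule prod.cong) (simp_all only: of_rat_diff of_rat_divide of_rat_of_nat_eq)
lemma binom_nth_rat: "binom_fps c (of_int m / of_nat q) $ k = of_rat (((of_int m / of_nat q) gchoose k) * (-1) ^ k) * c ^ k"
proof -
  have "binom_fps c (of_int m / of_nat q) $ k = ((of_int m / of_nat q) gchoose k) * (- c) ^ k"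
    by (rule binom_nth)
  also have "\<dots> = (of_rat (of_int m / of_nat q) gchoose k) * (- c) ^ k"
    by (simp only: expo_rat[symmetric])
  also have "\<dots> = of_rat ((of_int m / of_nat q) gchoose k) * ((-1) ^ k * c ^ k)"
    by (simp only: gchoose_of_rat power_minus[of c k])
  also have "\<dots> = of_rat (((of_int m / of_nat q) gchoose k) * (-1) ^ k) * c ^ k"
    by (simp only: of_rat_mult of_rat_power of_rat_minus of_rat_1 mult.assoc)
  finally show ?thesis .
qed


definition Fx :: "nat \<Rightarrow> nat \<Rightarrow> (nat \<Rightarrow> int) \<Rightarrow> complex \<Rightarrow> complex fps" where
  "Fx p q n \<xi> = (\<Prod>a\<in>{1..p-1}. binom_fps (\<xi> ^ a) (of_int (n a) / of_nat q))"

lemma F_theta_Fx: "F_theta p q n = Fx p q n (zeta p)"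
  by (simp add: F_theta_def Fx_def)

lemma Qz_1: "p > 0 \<Longrightarrow> 1 \<in> Qzeta p" using Qz_rat[of p 1] by simp

lemma Fx_Qz: assumes p: "p > 0" shows "Fx p q n (zeta p) $ k \<in> Qzeta p"
proof -
  have "\<forall>k. Fx p q n (zeta p) $ k \<in> Qzeta p"
    unfolding Fx_def
  proof (rule conjunct1[OF fps_hom_prod[where h = "\<lambda>x. x"]])
    fix a k
    show "binom_fps (zeta p ^ a) (of_int (n a) / of_nat q) $ k \<in> Qzeta p"
      unfolding binom_nth_rat by (intro Qz_rmult Qz_pow[OF p] Qz_zpow[OF p])
  qed (auto intro: Qz_add Qz_mult[OF p] Qz_0 Qz_1[OF p])
  thus ?thesis by blast
qed

lemma Fx_gal:
  assumes s: "\<sigma> \<in> gal p" and p: "p > 0"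
  shows "\<sigma> (Fx p q n (zeta p) $ k) = Fx p q n (\<sigma> (zeta p)) $ k"
proof -
  have cf: "\<And>a k. binom_fps (zeta p ^ a) (of_int (n a) / of_nat q) $ k \<in> Qzeta p"
    unfolding binom_nth_rat by (intro Qz_rmult Qz_pow[OF p] Qz_zpow[OF p])
  have "fpsmap \<sigma> (Fx p q n (zeta p)) = (\<Prod>a\<in>{1..p-1}. fpsmap \<sigma> (binom_fps (zeta p ^ a) (of_int (n a) / of_nat q)))"
    unfolding Fx_def
    by (rule conjunct2[OF fps_hom_prod[where S = "Qzeta p"]])
       (auto intro: Qz_add Qz_mult[OF p] Qz_0 Qz_1[OF p] gal_add[OF s] gal_mult[OF s] gal_zero[OF s] gal_one[OF s] cf)
  also have "\<dots> = Fx p q n (\<sigma> (zeta p))"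
    unfolding Fx_def
  proof (rule prod.cong[OF refl])
    fix a
    show "fpsmap \<sigma> (binom_fps (zeta p ^ a) (of_int (n a) / of_nat q)) = binom_fps (\<sigma> (zeta p) ^ a) (of_int (n a) / of_nat q)"
    proof (rule fps_ext)
      fix k
      have "\<sigma> (of_rat (((of_int (n a) / of_nat q) gchoose k) * (-1) ^ k) * (zeta p ^ a) ^ k)
          = of_rat (((of_int (n a) / of_nat q) gchoose k) * (-1) ^ k) * (\<sigma> (zeta p) ^ a) ^ k"
        using gal_mult[OF s Qz_rat[OF p] Qz_pow[OF p Qz_zpow[OF p]]] gal_of_rat[OF s p]
          gal_pow[OF s p Qz_zpow[OF p]] gal_pow[OF s p Qz_zpow[OF p, of 1]]
        by (simp add: power_mult[symmetric])
      thus "fpsmap \<sigma> (binom_fps (zeta p ^ a) (of_int (n a) / of_nat q)) $ k = binom_fps (\<sigma> (zeta p) ^ a) (of_int (n a) / of_nat q) $ k"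
        by (simp add: fpsmap_def binom_nth_rat)
    qed
  qed
  finally show ?thesis by (metis fpsmap_def fps_nth_Abs_fps)
qed

lemma root_norm: fixes \<xi> :: complex assumes p: "p > 0" and x: "\<xi> ^ p = 1" shows "norm \<xi> = 1"
proof -
  obtain j where "\<xi> = zeta p ^ j" using zeta_roots[OF p x] by blast
  thus ?thesis by (simp add: norm_power zeta_norm)
qed

lemma Fx_cnj:
  assumes p: "p > 0" and x: "\<xi> ^ p = 1" and sym: "\<And>a. a \<in> {1..p-1} \<Longrightarrow> n (p - a) = n a"
  shows "cnj (Fx p q n \<xi> $ k) = Fx p q n \<xi> $ k"
proof -
  have nx: "norm \<xi> = 1" by (rule root_norm[OF p x])
  have "fpsmap cnj (Fx p q n \<xi>) = (\<Prod>a\<in>{1..p-1}. fpsmap cnj (binom_fps (\<xi> ^ a) (of_int (n a) / of_nat q)))"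
    unfolding Fx_def by (rule conjunct2[OF fps_hom_prod[where S = UNIV]]) auto
  also have "\<dots> = (\<Prod>a\<in>{1..p-1}. binom_fps (\<xi> ^ (p - a)) (of_int (n a) / of_nat q))"
  proof (rule prod.cong[OF refl])
    fix a assume a: "a \<in> {1..p-1}"
    have c: "cnj (\<xi> ^ a) = \<xi> ^ (p - a)"
    proof -
      have "p - a + a = p" using a by auto
      hence "\<xi> ^ (p - a) * \<xi> ^ a = 1" using x by (metis power_add)
      hence "\<xi> ^ (p - a) = inverse (\<xi> ^ a)" by (metis inverse_unique mult.commute)
      moreover have "cnj (\<xi> ^ a) = inverse (\<xi> ^ a)" by (rule cnj_root1) (simp add: norm_power nx)
      ultimately show ?thesis by simp
    qed
    show "fpsmap cnj (binom_fps (\<xi> ^ a) (of_int (n a) / of_nat q)) = binom_fps (\<xi> ^ (p - a)) (of_int (n a) / of_nat q)"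
      by (rule fps_ext) (simp add: fpsmap_def binom_nth_rat c[symmetric])
  qed
  also have "\<dots> = Fx p q n \<xi>" unfolding Fx_def
    by (rule prod.reindex_bij_witness[of _ "\<lambda>b. p - b" "\<lambda>a. p - a"]) (auto simp: sym)
  finally show ?thesis by (metis fpsmap_def fps_nth_Abs_fps)
qed


lemma binom_radius:
  assumes c: "norm c = 1"
  shows "fps_conv_radius (binom_fps c r) \<ge> 1"
proof -
  have "fps_conv_radius (binom_fps c r) = conv_radius (\<lambda>k. r gchoose k)"
    unfolding fps_conv_radius_def
    by (rule conv_radius_cong) (simp add: binom_nth norm_mult norm_power c)
  also have "\<dots> = (if r \<in> \<nat> then \<infinity> else 1)" by (rule conv_radius_gchoose)
  finally show ?thesis by simp
qed

lemma binom_sums: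
  assumes c: "norm c = 1" and z: "norm z < 1"
  shows "(\<lambda>k. binom_fps c r $ k * z ^ k) sums (1 - c * z) powr r"
proof -
  have "norm (- c * z) < 1" using c z by (simp add: norm_mult)
  from gen_binomial_complex[OF this, of r]
  have "(\<lambda>k. (r gchoose k) * (- c * z) ^ k) sums (1 + - c * z) powr r" .
  moreover have "(\<lambda>k. (r gchoose k) * (- c * z) ^ k) = (\<lambda>k. binom_fps c r $ k * z ^ k)"
  proof (rule ext)
    fix k
    have "(- c * z) ^ k = (- c) ^ k * z ^ k" by (rule power_mult_distrib)
    thus "(r gchoose k) * (- c * z) ^ k = binom_fps c r $ k * z ^ k" by (simp only: binom_nth mult.assoc)
  qed
  ultimately show ?thesis by simp
qed

lemma eval_prod:
  fixes f :: "'b \<Rightarrow> complex fps"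
  assumes "\<And>a. a \<in> A \<Longrightarrow> ereal (norm z) < fps_conv_radius (f a)"
  shows "ereal (norm z) < fps_conv_radius (\<Prod>a\<in>A. f a) \<and> eval_fps (\<Prod>a\<in>A. f a) z = (\<Prod>a\<in>A. eval_fps (f a) z)"
  using assms
proof (induction A rule: infinite_finite_induct)
  case (insert x F)
  have r1: "ereal (norm z) < fps_conv_radius (f x)" using insert by auto
  have r2: "ereal (norm z) < fps_conv_radius (\<Prod>a\<in>F. f a)" using insert by auto
  have "ereal (norm z) < min (fps_conv_radius (f x)) (fps_conv_radius (\<Prod>a\<in>F. f a))" using r1 r2 by simp
  also have "\<dots> \<le> fps_conv_radius (f x * (\<Prod>a\<in>F. f a))" by (rule fps_conv_radius_mult)
  finally have "ereal (norm z) < fps_conv_radius (f x * (\<Prod>a\<in>F. f a))" .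
  moreover have "eval_fps (f x * (\<Prod>a\<in>F. f a)) z = eval_fps (f x) z * eval_fps (\<Prod>a\<in>F. f a) z"
    by (rule eval_fps_mult[OF r1 r2])
  ultimately show ?case using insert by auto
qed auto

lemma Fx_sums:
  assumes p: "p > 0" and x: "\<xi> ^ p = 1" and z: "norm z < 1"
  shows "(\<lambda>k. Fx p q n \<xi> $ k * z ^ k) sums (\<Prod>a\<in>{1..p-1}. (1 - \<xi> ^ a * z) powr (of_int (n a) / of_nat q))"
proof -
  have nx: "norm \<xi> = 1" by (rule root_norm[OF p x])
  have na: "norm (\<xi> ^ a) = 1" for a by (simp add: norm_power nx)
  have rad: "ereal (norm z) < fps_conv_radius (binom_fps (\<xi> ^ a) (of_int (n a) / of_nat q))" for a
  proof -
    have "ereal (norm z) < 1" using z by simp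
    also have "\<dots> \<le> fps_conv_radius (binom_fps (\<xi> ^ a) (of_int (n a) / of_nat q))" by (rule binom_radius[OF na])
    finally show ?thesis .
  qed
  have ev: "eval_fps (binom_fps (\<xi> ^ a) (of_int (n a) / of_nat q)) z = (1 - \<xi> ^ a * z) powr (of_int (n a) / of_nat q)" for a
    using sums_unique2[OF sums_eval_fps[OF rad[of a]] binom_sums[OF na z]] .
  have "ereal (norm z) < fps_conv_radius (Fx p q n \<xi>) \<and> eval_fps (Fx p q n \<xi>) z = (\<Prod>a\<in>{1..p-1}. (1 - \<xi> ^ a * z) powr (of_int (n a) / of_nat q))"
    unfolding Fx_def using eval_prod[of "{1..p-1}" z "\<lambda>a. binom_fps (\<xi> ^ a) (of_int (n a) / of_nat q)"] rad ev by simp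
  thus ?thesis using sums_eval_fps by metis
qed

lemma powr_q:
  fixes w :: complex
  assumes w: "w \<noteq> 0" and q: "q > 0"
  shows "(w powr (of_int m / of_nat q)) ^ q = w powi m"
proof -
  have "(w powr (of_int m / of_nat q)) ^ q = exp (of_int m / of_nat q * ln w) ^ q" using w by (simp add: powr_def)
  also have "\<dots> = exp (of_nat q * (of_int m / of_nat q * ln w))" by (rule exp_of_nat_mult[symmetric])
  also have "of_nat q * (of_int m / of_nat q * ln w) = of_int m * ln w" using q by simp
  also have "exp (of_int m * ln w) = w powr of_int m" using w by (simp add: powr_def)
  also have "\<dots> = w powi m" using w by (rule complex_powr_of_int[OF disjI1])
  finally show ?thesis .
qed


lemma of_rat_complex: "(of_rat r :: complex) = of_real (of_rat r)"
proof -
  obtain a b where ab: "quotient_of r = (a, b)" by (metis surj_pair)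
  have r: "r = of_int a / of_int b" using quotient_of_div[OF ab] .
  show ?thesis by (simp add: r of_rat_divide)
qed

lemma norm_of_rat_lt1: assumes "\<bar>t\<bar> < 1" shows "norm (of_rat t :: complex) < 1"
proof -
  have "norm (of_rat t :: complex) = \<bar>of_rat t :: real\<bar>" by (simp add: of_rat_complex)
  also have "\<dots> = of_rat \<bar>t\<bar>" by (rule abs_of_rat)
  also have "\<dots> < of_rat 1" using assms by (simp only: of_rat_less)
  finally show ?thesis by simp
qed

lemma real_odd_pow_eq:
  fixes x y :: complex
  assumes "cnj x = x" "cnj y = y" "x ^ q = y ^ q" "odd q"
  shows "x = y"
proof -
  have x: "x = of_real (Re x)" and y: "y = of_real (Re y)" using assms(1,2) by (metis Reals_cnj_iff Re_complex_of_real Reals_cases)+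
  have "of_real (Re x ^ q) = (of_real (Re y ^ q) :: complex)" using assms(3) x y by (metis of_real_power)
  hence "Re x ^ q = Re y ^ q" by (simp only: of_real_eq_iff)
  hence "root q (Re x ^ q) = root q (Re y ^ q)" by simp
  hence "Re x = Re y" using assms(4) by (simp add: odd_real_root_power_cancel)
  thus ?thesis using x y by simp
qed

lemma key_b:
  assumes p: "prime p" and q: "prime q" "odd q" and pq: "p \<noteq> q"
    and sym: "\<And>a. a \<in> {1..p-1} \<Longrightarrow> n (p - a) = n a"
    and x: "\<xi> ^ p = 1" and tc: "norm tc < 1" "cnj tc = tc"
    and b: "\<beta> \<in> Qzeta p" and bq: "\<beta> ^ q = (\<Prod>a\<in>{1..p-1}. (1 - tc * \<xi> ^ a) powi n a)"
  shows "cnj \<beta> = \<beta> \<and> (\<lambda>k. Fx p q n \<xi> $ k * tc ^ k) sums \<beta>"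
proof -
  have p0: "p > 0" using p prime_gt_0_nat by auto
  have q0: "q > 0" using q prime_gt_0_nat by auto
  have nx: "norm \<xi> = 1" by (rule root_norm[OF p0 x])
  define E where "E = (\<Prod>a\<in>{1..p-1}. (1 - \<xi> ^ a * tc) powr (of_int (n a) / of_nat q))"
  have S: "(\<lambda>k. Fx p q n \<xi> $ k * tc ^ k) sums E" unfolding E_def by (rule Fx_sums[OF p0 x tc(1)])
  have "(\<lambda>k. cnj (Fx p q n \<xi> $ k * tc ^ k)) = (\<lambda>k. Fx p q n \<xi> $ k * tc ^ k)"
    using Fx_cnj[of p \<xi> n q, OF p0 x sym] tc(2) by simp
  hence "(\<lambda>k. Fx p q n \<xi> $ k * tc ^ k) sums cnj E" using S sums_cnj by metis
  hence Er: "cnj E = E" using S sums_unique2 by blast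
  have nz: "1 - \<xi> ^ a * tc \<noteq> 0" for a
  proof
    assume "1 - \<xi> ^ a * tc = 0"
    hence "\<xi> ^ a * tc = 1" by simp
    hence "norm (\<xi> ^ a * tc) = 1" by simp
    thus False using tc(1) by (simp add: norm_mult norm_power nx)
  qed
  have "E ^ q = (\<Prod>a\<in>{1..p-1}. ((1 - \<xi> ^ a * tc) powr (of_int (n a) / of_nat q)) ^ q)"
    unfolding E_def by (rule prod_power_distrib)
  also have "\<dots> = (\<Prod>a\<in>{1..p-1}. (1 - tc * \<xi> ^ a) powi n a)"
  proof (rule prod.cong[OF refl])
    fix a
    have "((1 - \<xi> ^ a * tc) powr (of_int (n a) / of_nat q)) ^ q = (1 - \<xi> ^ a * tc) powi n a"
      by (rule powr_q[OF nz q0])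
    thus "((1 - \<xi> ^ a * tc) powr (of_int (n a) / of_nat q)) ^ q = (1 - tc * \<xi> ^ a) powi n a"
      by (simp only: mult.commute)
  qed
  finally have Eq: "E ^ q = \<beta> ^ q" using bq by simp
  have "cnj (\<beta> ^ q) = \<beta> ^ q" using Eq Er by (metis complex_cnj_power)
  hence br: "cnj \<beta> = \<beta>" by (rule real_lemma[OF p q pq b])
  have "\<beta> = E" by (rule real_odd_pow_eq[OF br Er Eq[symmetric] q(2)])
  thus ?thesis using br S by simp
qed

lemma powi_split:
  fixes w :: complex
  assumes "w \<noteq> 0"
  shows "w powi k * w ^ nat (- k) = w ^ nat k"
proof (cases "k \<ge> 0")
  case True thus ?thesis by (simp add: power_int_def)
next
  case False
  thus ?thesis using assms by (simp add: power_int_def field_simps)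
qed

theorem proposition4:
  fixes p q :: nat and n :: "nat \<Rightarrow> int"
  assumes "prime p" and "prime q" and "odd p" and "odd q" and "p \<noteq> q"
    and "\<exists>m :: nat \<Rightarrow> int. \<forall>a\<in>{1..p-1}. n a = m a + m (p - a)"
  shows "(\<forall>k. fps_nth (F_theta p q n) k \<in> Qzeta_plus p)
    \<and> (\<forall>(t::rat) \<alpha>. \<bar>t\<bar> < 1 \<and> \<alpha> \<in> Qzeta p
          \<and> (\<Prod>a\<in>{1..p-1}. (1 - of_rat t * zeta p ^ a) powi n a) = \<alpha> ^ q
        \<longrightarrow> \<alpha> \<in> Qzeta_plus p
          \<and> (\<forall>\<sigma>\<in>gal p. (\<lambda>k. \<sigma> (fps_nth (F_theta p q n) k) * of_rat t ^ k) sums \<sigma> \<alpha>))"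
proof -
  note p = assms(1) and q = assms(2,4) and pq = assms(5)
  have p0: "p > 0" using p prime_gt_0_nat by auto
  have p1: "p > 1" using p prime_gt_1_nat by auto
  obtain m where m: "\<forall>a\<in>{1..p-1}. n a = m a + m (p - a)" using assms(6) by blast
  have sym: "n (p - a) = n a" if a: "a \<in> {1..p-1}" for a
  proof -
    have "p - a \<in> {1..p-1}" "p - (p - a) = a" using a by auto
    thus ?thesis using m a by (metis add.commute)
  qed
  have zp: "zeta p ^ p = 1" by (rule zeta_p[OF p0])
  have A: "\<forall>k. fps_nth (F_theta p q n) k \<in> Qzeta_plus p"
  proof
    fix k
    show "fps_nth (F_theta p q n) k \<in> Qzeta_plus p" unfolding F_theta_Fx
      by (rule Qzp_real[OF p0 Fx_Qz[OF p0]]) (rule Fx_cnj[where n = n, OF p0 zp sym])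
  qed
  have B: "\<alpha> \<in> Qzeta_plus p \<and> (\<forall>\<sigma>\<in>gal p. (\<lambda>k. \<sigma> (fps_nth (F_theta p q n) k) * of_rat t ^ k) sums \<sigma> \<alpha>)"
    if t: "\<bar>t\<bar> < 1" and a: "\<alpha> \<in> Qzeta p" and h: "(\<Prod>a\<in>{1..p-1}. (1 - of_rat t * zeta p ^ a) powi n a) = \<alpha> ^ q"
    for t :: rat and \<alpha>
  proof -
    define tc :: complex where "tc = of_rat t"
    have tc: "norm tc < 1" "cnj tc = tc" using norm_of_rat_lt1[OF t] by (simp_all add: tc_def)
    have "cnj \<alpha> = \<alpha>" using key_b[where n = n, OF p q pq sym zp tc a] h by (simp add: tc_def)
    hence a1: "\<alpha> \<in> Qzeta_plus p" by (rule Qzp_real[OF p0 a])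
    have a2: "(\<lambda>k. \<sigma> (fps_nth (F_theta p q n) k) * of_rat t ^ k) sums \<sigma> \<alpha>" if s: "\<sigma> \<in> gal p" for \<sigma>
    proof -
      define \<xi> where "\<xi> = \<sigma> (zeta p)"
      have xp: "\<xi> ^ p = 1" unfolding \<xi>_def by (rule gal_zeta_p[OF s p0])
      define w where "w = (\<lambda>a. 1 - tc * zeta p ^ a)"
      define w' where "w' = (\<lambda>a. 1 - tc * \<xi> ^ a)"
      have wQ: "w a \<in> Qzeta p" for a
        unfolding w_def tc_def by (intro Qz_diff[OF p0] Qz_1[OF p0] Qz_rmult Qz_zpow[OF p0])
      have sw: "\<sigma> (w a) = w' a" for a
      proof -
        have wa: "w a = of_rat 1 + of_rat (- t) * zeta p ^ a" by (simp add: w_def tc_def of_rat_minus)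
        have "\<sigma> (w a) = \<sigma> (of_rat 1) + \<sigma> (of_rat (- t) * zeta p ^ a)"
          by (subst wa) (rule gal_add[OF s Qz_rat[OF p0] Qz_rmult[OF Qz_zpow[OF p0]]])
        also have "\<sigma> (of_rat (- t) * zeta p ^ a) = of_rat (- t) * \<xi> ^ a"
          using gal_mult[OF s Qz_rat[OF p0] Qz_zpow[OF p0]] gal_of_rat[OF s p0] gal_pow[OF s p0 Qz_zpow[OF p0, of 1]]
          by (simp add: \<xi>_def)
        finally show ?thesis using gal_of_rat[OF s p0, of 1] by (simp add: w'_def tc_def of_rat_minus)
      qed
      have wnz: "w a \<noteq> 0" "w' a \<noteq> 0" for a
      proof -
        have nx: "norm \<xi> = 1" by (rule root_norm[OF p0 xp])
        have "norm (tc * zeta p ^ a) < 1" "norm (tc * \<xi> ^ a) < 1"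
          using tc(1) by (simp_all add: norm_mult norm_power zeta_norm nx)
        thus "w a \<noteq> 0" "w' a \<noteq> 0" unfolding w_def w'_def by (auto simp: right_minus_eq)
      qed
      define I where "I = {1..p-1}"
      have h1: "\<alpha> ^ q * (\<Prod>a\<in>I. w a ^ nat (- n a)) = (\<Prod>a\<in>I. w a ^ nat (n a))"
      proof -
        have "\<alpha> ^ q * (\<Prod>a\<in>I. w a ^ nat (- n a)) = (\<Prod>a\<in>I. w a powi n a) * (\<Prod>a\<in>I. w a ^ nat (- n a))"
          using h by (simp add: I_def w_def tc_def)
        also have "\<dots> = (\<Prod>a\<in>I. w a powi n a * w a ^ nat (- n a))" by (rule prod.distrib[symmetric])
        also have "\<dots> = (\<Prod>a\<in>I. w a ^ nat (n a))" by (rule prod.cong[OF refl]) (rule powi_split[OF wnz(1)])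
        finally show ?thesis .
      qed
      have "\<sigma> (\<alpha> ^ q * (\<Prod>a\<in>I. w a ^ nat (- n a))) = \<sigma> \<alpha> ^ q * (\<Prod>a\<in>I. w' a ^ nat (- n a))"
      proof -
        have "\<sigma> (\<alpha> ^ q * (\<Prod>a\<in>I. w a ^ nat (- n a))) = \<sigma> (\<alpha> ^ q) * \<sigma> (\<Prod>a\<in>I. w a ^ nat (- n a))"
          by (rule gal_mult[OF s Qz_pow[OF p0 a] Qz_prod[OF p0 Qz_pow[OF p0 wQ]]])
        also have "\<sigma> (\<Prod>a\<in>I. w a ^ nat (- n a)) = (\<Prod>a\<in>I. \<sigma> (w a ^ nat (- n a)))"
          by (rule gal_prod[OF s p0 Qz_pow[OF p0 wQ]])
        also have "\<dots> = (\<Prod>a\<in>I. w' a ^ nat (- n a))"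
          by (rule prod.cong[OF refl]) (simp add: gal_pow[OF s p0 wQ] sw)
        finally show ?thesis using gal_pow[OF s p0 a] by simp
      qed
      moreover have "\<sigma> (\<Prod>a\<in>I. w a ^ nat (n a)) = (\<Prod>a\<in>I. w' a ^ nat (n a))"
      proof -
        have "\<sigma> (\<Prod>a\<in>I. w a ^ nat (n a)) = (\<Prod>a\<in>I. \<sigma> (w a ^ nat (n a)))"
          by (rule gal_prod[OF s p0 Qz_pow[OF p0 wQ]])
        also have "\<dots> = (\<Prod>a\<in>I. w' a ^ nat (n a))"
          by (rule prod.cong[OF refl]) (simp add: gal_pow[OF s p0 wQ] sw)
        finally show ?thesis .
      qed
      ultimately have h2: "\<sigma> \<alpha> ^ q * (\<Prod>a\<in>I. w' a ^ nat (- n a)) = (\<Prod>a\<in>I. w' a ^ nat (n a))"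
        using h1 by simp
      also have "\<dots> = (\<Prod>a\<in>I. w' a powi n a * w' a ^ nat (- n a))"
        by (rule prod.cong[OF refl]) (rule powi_split[OF wnz(2), symmetric])
      also have "\<dots> = (\<Prod>a\<in>I. w' a powi n a) * (\<Prod>a\<in>I. w' a ^ nat (- n a))" by (rule prod.distrib)
      finally have "\<sigma> \<alpha> ^ q * (\<Prod>a\<in>I. w' a ^ nat (- n a)) = (\<Prod>a\<in>I. w' a powi n a) * (\<Prod>a\<in>I. w' a ^ nat (- n a))" .
      moreover have "(\<Prod>a\<in>I. w' a ^ nat (- n a)) \<noteq> 0" using wnz(2) by (simp add: I_def)
      ultimately have sq: "\<sigma> \<alpha> ^ q = (\<Prod>a\<in>I. (1 - tc * \<xi> ^ a) powi n a)" by (simp add: w'_def)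
      have sa: "\<sigma> \<alpha> \<in> Qzeta p" by (rule gal_in[OF s a])
      have "(\<lambda>k. Fx p q n \<xi> $ k * tc ^ k) sums \<sigma> \<alpha>"
        using key_b[where n = n, OF p q pq sym xp tc sa] sq by (simp add: I_def)
      moreover have "\<sigma> (fps_nth (F_theta p q n) k) = Fx p q n \<xi> $ k" for k
        unfolding F_theta_Fx \<xi>_def by (rule Fx_gal[OF s p0])
      ultimately show ?thesis by (simp add: tc_def)
    qed
    show ?thesis using a1 a2 by blast
  qed
  show ?thesis using A B by blast
qed

end
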